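(* Let $q>1$, $\beta>0$, $\mu\in\mathbb{R}$, $\alpha\in\mathbb{R}$, $\rho>0$, and let $U_d$ be an open unbounded sector with vertex at $0$ and bisecting direction $d$, and $\delta\in\mathbb{R}$ such that the point $-\delta$ has positive distance to $U_d\cup D(0,\rho)$. Let $Q(X),R(X)\in\mathbb{C}[X]$ with $\deg(R)\ge\deg(Q)$ and $R(im)\neq0$ for all $m\in\mathbb{R}$, let $b:\mathbb{R}\to\mathbb{C}$ be continuous with $|b(m)|\le 1/|R(im)|$ for all $m\in\mathbb{R}$, and assume $\mu>\deg(Q)+1$. Let $1<k\le\kappa$, where $k$ is an integer. Let $c_h\in E_{(\beta,\mu)}$ for $h=0,\dots,p_1$ and $$\varphi_k(\tau,m)=\sum_{h=0}^{p_1}c_h(m)\frac{\tau^h}{(q^{1/k})^{h(h-1)/2}}.$$ For $f\in \mathrm{Exp}^q_{(\kappa,\beta,\mu,\alpha,\rho)}$ define $$\varphi_k(\tau,m)\star^{Q}_{q;1/k}f(\tau,m):=\sum_{h=0}^{p_1}\frac{\tau^h}{(q^{1/k})^{h(h-1)/2}}\int_{-\infty}^{+\infty}c_h(m-m_1)Q(im_1)f(q^{-h/k}\tau,m_1)\,dm_1 .$$ Then for every $f\in\mathrm{Exp}^q_{(\kappa,\beta,\mu,\alpha,\rho)}$, the function $b(m)\,\varphi_k(\tau,m)\star^{Q}_{q;1/k}f(\tau,m)$ belongs to $\mathrm{Exp}^q_{(\kappa,\beta,\mu,\alpha,\rho)}$, and there exist constants $C_{3,h}>0$ ($0\le h\le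 p_1$), depending on $\mu,q,\alpha,k,\kappa,Q,R,\delta$, such that $$\left\|b(m)\varphi_k(\tau,m)\star^{Q}_{q;1/k}f(\tau,m)\right\|_{(\kappa,\beta,\mu,\alpha,\rho)}\le\Big(\sum_{h=0}^{p_1}C_{3,h}\|c_h\|_{(\beta,\mu)}\Big)\|f\|_{(\kappa,\beta,\mu,\alpha,\rho)}.$$
   Context: $E_{(\beta,\mu)}$ is the Banach space of continuous functions $h:\mathbb{R}\to\mathbb{C}$ with $\|h\|_{(\beta,\mu)}=\sup_{m\in\mathbb{R}}(1+|m|)^{\mu}e^{\beta|m|}|h(m)|<\infty$. For $k>0$, $\mathrm{Exp}^q_{(k,\beta,\mu,\alpha,\rho)}$ is the Banach space of continuous functions $h(\tau,m)$ on $(U_d\cup\overline{D}(0,\rho))\times\mathbb{R}$, holomorphic in $\tau$ on $U_d\cup D(0,\rho)$, such that $$\|h\|_{(k,\beta,\mu,\alpha,\rho)}=\sup_{\tau\in U_d\cup\overline D(0,\rho),\,m\in\mathbb{R}}(1+|m|)^{\mu}e^{\beta|m|}\exp\Big(-\frac{k}{2}\frac{\log^2|\tau+\delta|}{\log q}-\alpha\log|\tau+\delta|\Big)|h(\tau,m)|<\infty .$$ *)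

theory Defs
  imports "HOL-Analysis.Analysis" "HOL-Computational_Algebra.Polynomial"
begin

definition sector :: "real \<Rightarrow> real \<Rightarrow> complex set" where
  "sector d a = {z. z \<noteq> 0 \<and> (\<exists>t. \<bar>t - d\<bar> < a \<and> z = complex_of_real (cmod z) * cis t)}"

definition E_norm :: "real \<Rightarrow> real \<Rightarrow> (real \<Rightarrow> complex) \<Rightarrow> real" where
  "E_norm \<beta> \<mu> h = (SUP m\<in>UNIV. (1 + \<bar>m\<bar>) powr \<mu> * exp (\<beta> * \<bar>m\<bar>) * cmod (h m))"

definition E_space :: "real \<Rightarrow> real \<Rightarrow> (real \<Rightarrow> complex) set" where
  "E_space \<beta> \<mu> = {h. continuous_on UNIV h \<and>
      bdd_above ((\<lambda>m. (1 + \<bar>m\<bar>) powr \<mu> * exp (\<beta> * \<bar>m\<bar>) * cmod (h m)) ` UNIV)}"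

definition exp_weight ::
  "real \<Rightarrow> real \<Rightarrow> real \<Rightarrow> real \<Rightarrow> real \<Rightarrow> real \<Rightarrow> complex \<Rightarrow> real \<Rightarrow> real" where
  "exp_weight q \<delta> k \<beta> \<mu> \<alpha> \<tau> m =
     (1 + \<bar>m\<bar>) powr \<mu> * exp (\<beta> * \<bar>m\<bar>) *
     exp (- (k / 2) * (ln (cmod (\<tau> + complex_of_real \<delta>)))\<^sup>2 / ln q
          - \<alpha> * ln (cmod (\<tau> + complex_of_real \<delta>)))"

definition Exp_norm ::
  "real \<Rightarrow> complex set \<Rightarrow> real \<Rightarrow> real \<Rightarrow> real \<Rightarrow> real \<Rightarrow> real \<Rightarrow> real
     \<Rightarrow> (complex \<Rightarrow> real \<Rightarrow> complex) \<Rightarrow> real" where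
  "Exp_norm q U \<delta> k \<beta> \<mu> \<alpha> \<rho> h =
     (SUP p\<in>(U \<union> cball 0 \<rho>) \<times> UNIV.
        exp_weight q \<delta> k \<beta> \<mu> \<alpha> (fst p) (snd p) * cmod (h (fst p) (snd p)))"

definition Exp_space ::
  "real \<Rightarrow> complex set \<Rightarrow> real \<Rightarrow> real \<Rightarrow> real \<Rightarrow> real \<Rightarrow> real \<Rightarrow> real
     \<Rightarrow> (complex \<Rightarrow> real \<Rightarrow> complex) set" where
  "Exp_space q U \<delta> k \<beta> \<mu> \<alpha> \<rho> = {h.
     continuous_on ((U \<union> cball 0 \<rho>) \<times> UNIV) (\<lambda>p. h (fst p) (snd p)) \<and>
     (\<forall>m. (\<lambda>\<tau>. h \<tau> m) holomorphic_on (U \<union> ball 0 \<rho>)) \<and>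
     bdd_above ((\<lambda>p. exp_weight q \<delta> k \<beta> \<mu> \<alpha> (fst p) (snd p) * cmod (h (fst p) (snd p)))
                  ` ((U \<union> cball 0 \<rho>) \<times> UNIV))}"

definition q_conv ::
  "real \<Rightarrow> nat \<Rightarrow> nat \<Rightarrow> (nat \<Rightarrow> real \<Rightarrow> complex) \<Rightarrow> complex poly
     \<Rightarrow> (complex \<Rightarrow> real \<Rightarrow> complex) \<Rightarrow> complex \<Rightarrow> real \<Rightarrow> complex" where
  "q_conv q k p1 c Q f \<tau> m =
     (\<Sum>h = 0..p1. \<tau> ^ h / complex_of_real ((q powr (1 / real k)) powr (real h * (real h - 1) / 2))
        * (LINT m1|lborel. c h (m - m1) * poly Q (\<i> * complex_of_real m1)
              * f (complex_of_real (q powr (- real h / real k)) * \<tau>) m1))"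

end

theory Submission
  imports Defs "HOL-Complex_Analysis.Complex_Analysis"
begin

lemma sector_scale:
  assumes "z \<in> sector d a" "s > 0"
  shows "complex_of_real s * z \<in> sector d a"
proof -
  from assms obtain t where t: "\<bar>t - d\<bar> < a" "z = complex_of_real (cmod z) * cis t" "z \<noteq> 0"
    unfolding sector_def by auto
  have "complex_of_real s * z = complex_of_real (cmod (complex_of_real s * z)) * cis t"
    using assms(2) by (subst t(2)) (simp add: norm_mult)
  then show ?thesis using t assms(2) unfolding sector_def by auto
qed

lemma open_sector: "open (sector d a)"
proof (rule openI)
  fix z assume z: "z \<in> sector d a"
  from z obtain t where t: "\<bar>t - d\<bar> < a" "z = complex_of_real (cmod z) * cis t" "z \<noteq> 0"
    unfolding sector_def by auto
  define \<phi> where "\<phi> w = Im (ln (w / z))" for w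
  have "isCont (\<lambda>w. ln (w / z)) z"
    using t(3) by (intro isCont_Ln') (auto intro!: continuous_intros)
  then have "isCont \<phi> z" unfolding \<phi>_def by (rule continuous_Im)
  moreover have "\<phi> z = 0" using t(3) by (simp add: \<phi>_def)
  ultimately have "(\<phi> \<longlongrightarrow> 0) (at z)" unfolding isCont_def by simp
  then have ev1: "\<forall>\<^sub>F w in at z. dist (\<phi> w) 0 < a - \<bar>t - d\<bar>"
    using t(1) by (intro tendstoD) auto
  have "((\<lambda>w. w) \<longlongrightarrow> z) (at z)" by (rule tendsto_ident_at)
  then have ev2: "\<forall>\<^sub>F w in at z. w \<noteq> 0"
    using t(3) by (rule tendsto_imp_eventually_ne)
  have "\<forall>\<^sub>F w in at z. w \<in> sector d a"
    using ev1 ev2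
  proof eventually_elim
    case (elim w)
    have "w / z = exp (ln (w / z))" using elim t(3) by simp
    also have "\<dots> = complex_of_real (exp (Re (ln (w/z)))) * cis (\<phi> w)"
      by (simp add: exp_eq_polar \<phi>_def)
    finally have wz: "w / z = complex_of_real (exp (Re (ln (w/z)))) * cis (\<phi> w)" .
    have "cmod (w / z) = cmod (complex_of_real (exp (Re (ln (w/z)))) * cis (\<phi> w))"
      using wz by (rule arg_cong)
    then have "cmod (w / z) = exp (Re (ln (w/z)))" by (simp only: norm_mult norm_cis norm_of_real) simp
    then have wz': "w / z = complex_of_real (cmod w / cmod z) * cis (\<phi> w)"
      using wz by (simp add: norm_divide)
    have "w = z * (w / z)" using t(3) by simp
    also have "\<dots> = complex_of_real (cmod z) * cis t * (complex_of_real (cmod w / cmod z) * cis (\<phi> w))"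
      by (subst wz', subst t(2)) simp
    also have "\<dots> = complex_of_real (cmod w) * cis (t + \<phi> w)"
      using t(3) by (simp add: cis_mult field_simps)
    finally have "w = complex_of_real (cmod w) * cis (t + \<phi> w)" .
    moreover have "\<bar>t + \<phi> w - d\<bar> < a" using elim by (simp add: dist_real_def)
    ultimately show ?case using elim unfolding sector_def by blast
  qed
  then obtain e where e: "e > 0" "\<And>w. w \<noteq> z \<Longrightarrow> dist w z < e \<Longrightarrow> w \<in> sector d a"
    unfolding eventually_at by blast
  show "\<exists>e>0. ball z e \<subseteq> sector d a"
    using e z by (intro exI[of _ e]) (metis dist_commute mem_ball subsetI)
qed

lemma dist_bound:
  assumes "\<rho> > 0" "\<tau> \<in> sector d a \<union> cball 0 \<rho>"
  shows "infdist (- complex_of_real \<delta>) (sector d a \<union> ball 0 \<rho>) \<le> cmod (\<tau> + complex_of_real \<delta>)"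
proof -
  let ?A = "sector d a \<union> ball 0 \<rho>"
  have "\<tau> \<in> closure ?A" using assms closure_ball[of \<rho> 0] closure_Un[of "sector d a" "ball 0 \<rho>"]
    closure_subset[of "sector d a"] by auto
  then have "infdist \<tau> ?A = 0" using in_closure_iff_infdist_zero[of ?A \<tau>] assms(1) by auto
  moreover have "infdist (- complex_of_real \<delta>) ?A \<le> infdist \<tau> ?A + dist (- complex_of_real \<delta>) \<tau>"
    by (rule infdist_triangle)
  moreover have "dist (- complex_of_real \<delta>) \<tau> = cmod (\<tau> + complex_of_real \<delta>)"
    by (simp add: dist_norm norm_minus_commute add.commute)
  ultimately show ?thesis by simp
qed

lemma dom_scale:
  assumes "\<tau> \<in> sector d a \<union> cball 0 \<rho>" "0 < s" "s \<le> 1"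
  shows "complex_of_real s * \<tau> \<in> sector d a \<union> cball 0 \<rho>"
  using assms sector_scale[of \<tau> d a s]
  by (auto simp: norm_mult intro: order_trans[OF mult_left_le_one_le])

lemma dom_scale_open:
  assumes "\<tau> \<in> sector d a \<union> ball 0 \<rho>" "0 < s" "s \<le> 1"
  shows "complex_of_real s * \<tau> \<in> sector d a \<union> ball 0 \<rho>"
  using assms sector_scale[of \<tau> d a s]
  by (auto simp: norm_mult intro: le_less_trans[OF mult_left_le_one_le])


lemma poly_upper:
  fixes P :: "complex poly"
  shows "\<exists>A>0. \<forall>z. cmod (poly P z) \<le> A * (1 + cmod z) ^ degree P"
proof -
  define A where "A = 1 + (\<Sum>i\<le>degree P. cmod (coeff P i))"
  have A0: "A > 0" unfolding A_def by (simp add: add_pos_nonneg sum_nonneg)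
  have "cmod (poly P z) \<le> A * (1 + cmod z) ^ degree P" for z
  proof -
    have "cmod (poly P z) \<le> (\<Sum>i\<le>degree P. cmod (coeff P i * z ^ i))"
      unfolding poly_altdef by (rule norm_sum)
    also have "\<dots> \<le> (\<Sum>i\<le>degree P. cmod (coeff P i) * (1 + cmod z) ^ degree P)"
    proof (rule sum_mono)
      fix i assume "i \<in> {..degree P}"
      then have "cmod z ^ i \<le> (1 + cmod z) ^ degree P"
      proof -
        have "cmod z ^ i \<le> (1 + cmod z) ^ i" by (intro power_mono) auto
        also have "\<dots> \<le> (1 + cmod z) ^ degree P" using \<open>i \<in> {..degree P}\<close> by (intro power_increasing) auto
        finally show ?thesis .
      qed
      then show "cmod (coeff P i * z ^ i) \<le> cmod (coeff P i) * (1 + cmod z) ^ degree P"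
        by (simp add: norm_mult norm_power mult_left_mono)
    qed
    also have "\<dots> = (\<Sum>i\<le>degree P. cmod (coeff P i)) * (1 + cmod z) ^ degree P"
      by (simp add: sum_distrib_right)
    also have "\<dots> \<le> A * (1 + cmod z) ^ degree P"
      unfolding A_def by (intro mult_right_mono) auto
    finally show ?thesis .
  qed
  with A0 show ?thesis by blast
qed

lemma poly_lower_far:
  fixes R :: "complex poly"
  assumes "R \<noteq> 0"
  shows "\<exists>T\<ge>1. \<forall>z. cmod z \<ge> T \<longrightarrow> cmod (lead_coeff R) * cmod z ^ degree R / 2 \<le> cmod (poly R z)"
proof -
  define n where "n = degree R"
  define l where "l = lead_coeff R"
  have l0: "cmod l > 0" using assms by (simp add: l_def)
  define As where "As = (\<Sum>i<n. cmod (coeff R i))"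
  have As0: "As \<ge> 0" unfolding As_def by (simp add: sum_nonneg)
  define T where "T = max 1 (2 * As / cmod l)"
  have "cmod l * cmod z ^ n / 2 \<le> cmod (poly R z)" if z: "cmod z \<ge> T" for z
  proof -
    have z1: "cmod z \<ge> 1" using z by (simp add: T_def)
    have split: "poly R z = l * z ^ n + (\<Sum>i<n. coeff R i * z ^ i)"
      unfolding poly_altdef n_def[symmetric] l_def
      by (simp add: lessThan_Suc_atMost[symmetric] n_def)
    have "cmod (\<Sum>i<n. coeff R i * z ^ i) \<le> (\<Sum>i<n. cmod (coeff R i) * cmod z ^ (n - 1))"
    proof -
      have "cmod (\<Sum>i<n. coeff R i * z ^ i) \<le> (\<Sum>i<n. cmod (coeff R i * z ^ i))" by (rule norm_sum)
      also have "\<dots> \<le> (\<Sum>i<n. cmod (coeff R i) * cmod z ^ (n - 1))"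
      proof (rule sum_mono)
        fix i assume "i \<in> {..<n}"
        then have "cmod z ^ i \<le> cmod z ^ (n - 1)" using z1 by (intro power_increasing) auto
        then show "cmod (coeff R i * z ^ i) \<le> cmod (coeff R i) * cmod z ^ (n - 1)"
          by (simp add: norm_mult norm_power mult_left_mono)
      qed
      finally show ?thesis .
    qed
    also have "\<dots> = As * cmod z ^ (n - 1)" by (simp add: As_def sum_distrib_right)
    also have "\<dots> \<le> cmod l * cmod z ^ n / 2"
    proof (cases n)
      case 0 then show ?thesis by (simp add: As_def)
    next
      case (Suc n')
      have "As \<le> cmod l * cmod z / 2" using z l0 unfolding T_def by (auto simp: field_simps)
      then have "As * cmod z ^ n' \<le> cmod l * cmod z / 2 * cmod z ^ n'"
        by (intro mult_right_mono) auto
      then show ?thesis using Suc by (simp add: field_simps)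
    qed
    finally have b: "cmod (\<Sum>i<n. coeff R i * z ^ i) \<le> cmod l * cmod z ^ n / 2" .
    have "cmod (l * z ^ n) \<le> cmod (poly R z) + cmod (\<Sum>i<n. coeff R i * z ^ i)"
      using split norm_triangle_ineq4[of "poly R z" "\<Sum>i<n. coeff R i * z ^ i"] by simp
    then have "cmod l * cmod z ^ n \<le> cmod (poly R z) + cmod (\<Sum>i<n. coeff R i * z ^ i)"
      by (simp add: norm_mult norm_power)
    then show ?thesis using b by simp
  qed
  then show ?thesis unfolding n_def l_def by (intro exI[of _ T]) (auto simp: T_def)
qed

lemma ratio_bound:
  fixes Q R :: "complex poly"
  assumes "degree Q \<le> degree R" "\<forall>m::real. poly R (\<i> * complex_of_real m) \<noteq> 0"
  shows "\<exists>B>0. \<forall>m::real. (1 + \<bar>m\<bar>) ^ degree Q / cmod (poly R (\<i> * complex_of_real m)) \<le> B"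
proof -
  have R0: "R \<noteq> 0" using assms(2) by auto
  obtain T where T: "T \<ge> 1" "\<And>z. cmod z \<ge> T \<Longrightarrow> cmod (lead_coeff R) * cmod z ^ degree R / 2 \<le> cmod (poly R z)"
    using poly_lower_far[OF R0] by blast
  have l0: "cmod (lead_coeff R) > 0" using R0 by simp
  define g where "g m = (1 + \<bar>m\<bar>) ^ degree Q / cmod (poly R (\<i> * complex_of_real m))" for m :: real
  have "continuous_on {-T..T} g" unfolding g_def using assms(2)
    by (intro continuous_intros) auto
  then have "bounded (g ` {-T..T})" by (intro compact_imp_bounded compact_continuous_image) auto
  then obtain B1 where B1': "\<forall>x\<in>g ` {-T..T}. norm x \<le> B1"
    unfolding bounded_iff by blast
  have B1: "\<bar>g m\<bar> \<le> B1" if "m \<in> {-T..T}" for m using B1' that by auto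
  define B2 where "B2 = 2 ^ degree Q * 2 / cmod (lead_coeff R)"
  have "g m \<le> B2" if m: "\<bar>m\<bar> \<ge> T" for m
  proof -
    have nz: "cmod (\<i> * complex_of_real m) = \<bar>m\<bar>" by (simp add: norm_mult)
    have low: "cmod (lead_coeff R) * \<bar>m\<bar> ^ degree R / 2 \<le> cmod (poly R (\<i> * complex_of_real m))"
      using T(2)[of "\<i> * complex_of_real m"] m nz by simp
    have m1: "\<bar>m\<bar> \<ge> 1" using m T by simp
    have "(1 + \<bar>m\<bar>) ^ degree Q \<le> (2 * \<bar>m\<bar>) ^ degree Q" using m1 by (intro power_mono) auto
    also have "\<dots> = 2 ^ degree Q * \<bar>m\<bar> ^ degree Q" by (simp add: power_mult_distrib)
    also have "\<dots> \<le> 2 ^ degree Q * \<bar>m\<bar> ^ degree R"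
      using m1 assms(1) by (intro mult_left_mono power_increasing) auto
    finally have up: "(1 + \<bar>m\<bar>) ^ degree Q \<le> 2 ^ degree Q * \<bar>m\<bar> ^ degree R" .
    have pos: "cmod (lead_coeff R) * \<bar>m\<bar> ^ degree R / 2 > 0" using l0 m1 by simp
    have "g m \<le> 2 ^ degree Q * \<bar>m\<bar> ^ degree R / (cmod (lead_coeff R) * \<bar>m\<bar> ^ degree R / 2)"
      unfolding g_def using up low pos by (intro frac_le) auto
    also have "\<dots> = B2" unfolding B2_def using m1 l0 by (simp add: field_simps)
    finally show ?thesis .
  qed
  moreover have "g m \<le> B1" if "\<bar>m\<bar> \<le> T" for m
  proof -
    have "m \<in> {-T..T}" using that by (auto simp: abs_le_iff)
    then show ?thesis using B1[of m] by linarith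
  qed
  ultimately have "g m \<le> max B1 B2 + 1" for m
    by (metis linorder_le_cases max.coboundedI1 max.coboundedI2 add_increasing2 zero_le_one order_trans le_add_same_cancel1 less_eq_real_def)
  moreover have "B2 > 0" using l0 by (simp add: B2_def)
  then have "max B1 B2 + 1 > 0" by linarith
  ultimately show ?thesis unfolding g_def by blast
qed


lemma integrable_decay:
  fixes p :: real
  assumes p: "p > 1"
  shows "integrable lborel (\<lambda>x::real. (1 + \<bar>x\<bar>) powr (-p))"
proof -
  define h where "h x = (if x \<in> {1..} then x powr (-p) else 0)" for x :: real
  have "((\<lambda>x. x powr (-p)) has_integral - (1 powr (-p + 1)) / (-p + 1)) {1::real..}"
    using p by (intro has_integral_powr_to_inf) auto
  then have hI: "(h has_integral - (1 powr (-p + 1)) / (-p + 1)) UNIV"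
    unfolding h_def by (subst has_integral_restrict_UNIV)
  have hm: "h \<in> borel_measurable borel" unfolding h_def by measurable
  have hnn: "\<And>x. 0 \<le> h x" unfolding h_def by auto
  have "integral\<^sup>N lborel h = - (1 powr (-p + 1)) / (-p + 1)"
    by (rule nn_integral_has_integral_lborel[OF hm hnn hI])
  then have hint: "integrable lborel h"
    by (intro integrableI_nn_integral_finite[OF _ _ ]) (auto simp: hm hnn)
  have h2int: "integrable lborel (\<lambda>x. h (0 + (-1) * x))"
    using hint by (intro lborel_integrable_real_affine) auto
  have iint: "integrable lborel (indicator {-1..1} :: real \<Rightarrow> real)"
    by (intro integrable_real_indicator) auto
  have bint: "integrable lborel (\<lambda>x. indicator {-1..1} x + h x + h (0 + (-1) * x))"
    using iint hint h2int by (intro Bochner_Integration.integrable_add) auto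
  show ?thesis
  proof (rule Bochner_Integration.integrable_bound[OF bint])
    show "(\<lambda>x::real. (1 + \<bar>x\<bar>) powr (-p)) \<in> borel_measurable lborel" by measurable
    show "AE x in lborel. norm ((1 + \<bar>x\<bar>) powr (-p)) \<le> norm (indicator {-1..1} x + h x + h (0 + (-1) * x))"
    proof (rule AE_I2)
      fix x :: real
      have nn: "0 \<le> indicator {-1..1} x + h x + h (0 + (-1) * x)"
        using hnn[of x] hnn[of "-x"] by (simp add: indicator_def)
      have "(1 + \<bar>x\<bar>) powr (-p) \<le> indicator {-1..1} x + h x + h (0 + (-1) * x)"
      proof (cases "\<bar>x\<bar> \<le> 1")
        case True
        have "(1 + \<bar>x\<bar>) powr (-p) \<le> 1" using p powr_mono2'[of "-p" 1 "1 + \<bar>x\<bar>"] by simp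
        then show ?thesis using True hnn[of x] hnn[of "-x"] by (simp add: indicator_def abs_le_iff)
      next
        case False
        have le: "(1 + \<bar>x\<bar>) powr (-p) \<le> \<bar>x\<bar> powr (-p)"
          using p False by (intro powr_mono2') auto
        show ?thesis
        proof (cases "x > 1")
          case True
          then show ?thesis using le hnn[of "-x"] by (simp add: h_def indicator_def)
        next
          case False2: False
          then have "x < -1" using False by auto
          then show ?thesis using le hnn[of x] by (simp add: h_def indicator_def)
        qed
      qed
      then show "norm ((1 + \<bar>x\<bar>) powr (-p)) \<le> norm (indicator {-1..1} x + h x + h (0 + (-1) * x))"
        using nn by simp
    qed
  qed
qed


lemma decay_shift:
  assumes "p > 1"
  shows "integrable lborel (\<lambda>x::real. (1 + \<bar>m - x\<bar>) powr (-p))"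
    and "(\<integral>x. (1 + \<bar>m - x\<bar>) powr (-p) \<partial>lborel) = (\<integral>x. (1 + \<bar>x\<bar>) powr (-p) \<partial>lborel)"
proof -
  have "integrable lborel (\<lambda>x::real. (1 + \<bar>m + (-1) * x\<bar>) powr (-p))"
    using integrable_decay[OF assms] by (intro lborel_integrable_real_affine[where f="\<lambda>x. (1 + \<bar>x\<bar>) powr (-p)"]) auto
  then show "integrable lborel (\<lambda>x::real. (1 + \<bar>m - x\<bar>) powr (-p))" by simp
  have "(\<integral>x. (1 + \<bar>x\<bar>) powr (-p) \<partial>lborel) = \<bar>-1\<bar> *\<^sub>R (\<integral>x. (1 + \<bar>m + (-1) * x\<bar>) powr (-p) \<partial>lborel)"
    by (rule lborel_integral_real_affine) simp
  then show "(\<integral>x. (1 + \<bar>m - x\<bar>) powr (-p) \<partial>lborel) = (\<integral>x. (1 + \<bar>x\<bar>) powr (-p) \<partial>lborel)" by simp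
qed

lemma conv_pointwise:
  fixes m x \<mu> a :: real
  assumes "a > 0" "a \<le> \<mu>"
  shows "(1 + \<bar>m\<bar>) powr a * ((1 + \<bar>m - x\<bar>) powr (-\<mu>) * (1 + \<bar>x\<bar>) powr (-a))
     \<le> 2 powr a * ((1 + \<bar>x\<bar>) powr (-a) + (1 + \<bar>m - x\<bar>) powr (-\<mu>))"
proof -
  define A where "A = 1 + \<bar>m - x\<bar>"
  define B where "B = 1 + \<bar>x\<bar>"
  have A1: "A \<ge> 1" and B1: "B \<ge> 1" by (auto simp: A_def B_def)
  have "1 + \<bar>m\<bar> \<le> 2 * max A B" unfolding A_def B_def by (auto simp: max_def abs_if split: if_splits)
  then have "(1 + \<bar>m\<bar>) powr a \<le> (2 * max A B) powr a" using assms by (intro powr_mono2) auto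
  also have "\<dots> = 2 powr a * max A B powr a" using A1 B1 by (simp add: powr_mult)
  also have "max A B powr a \<le> A powr a + B powr a"
    by (cases "A \<le> B") (auto simp: max_def)
  finally have *: "(1 + \<bar>m\<bar>) powr a \<le> 2 powr a * (A powr a + B powr a)"
    by (simp add: mult_left_mono)
  have nn: "0 \<le> A powr (-\<mu>) * B powr (-a)" by simp
  have "(1 + \<bar>m\<bar>) powr a * (A powr (-\<mu>) * B powr (-a))
        \<le> 2 powr a * (A powr a + B powr a) * (A powr (-\<mu>) * B powr (-a))"
    using * nn by (rule mult_right_mono)
  also have "\<dots> = 2 powr a * ((A powr a * A powr (-\<mu>)) * B powr (-a) + A powr (-\<mu>) * (B powr a * B powr (-a)))"
    by algebra
  also have "\<dots> = 2 powr a * (A powr (a - \<mu>) * B powr (-a) + A powr (-\<mu>))"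
  proof -
    have e1: "A powr a * A powr (-\<mu>) = A powr (a - \<mu>)" by (simp add: powr_add[symmetric])
    have e2: "B powr a * B powr (-a) = 1" using B1 by (simp add: powr_add[symmetric])
    show ?thesis by (simp only: e1 e2 mult_1_right)
  qed
  also have "\<dots> \<le> 2 powr a * (B powr (-a) + A powr (-\<mu>))"
  proof -
    have "A powr (a - \<mu>) \<le> A powr 0" using A1 assms by (intro powr_mono) auto
    then have "A powr (a - \<mu>) \<le> 1" using A1 by simp
    then have "A powr (a - \<mu>) * B powr (-a) \<le> 1 * B powr (-a)" by (intro mult_right_mono) auto
    then show ?thesis by (intro mult_left_mono) auto
  qed
  finally show ?thesis unfolding A_def B_def .
qed

lemma conv_est:
  fixes \<mu> a :: real
  assumes "\<mu> > 1" "a > 1" "a \<le> \<mu>"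
  shows "\<exists>K. \<forall>m::real. integrable lborel (\<lambda>x. (1 + \<bar>m - x\<bar>) powr (-\<mu>) * (1 + \<bar>x\<bar>) powr (-a)) \<and>
     (1 + \<bar>m\<bar>) powr a * (\<integral>x. (1 + \<bar>m - x\<bar>) powr (-\<mu>) * (1 + \<bar>x\<bar>) powr (-a) \<partial>lborel) \<le> K"
proof -
  define Ia where "Ia = (\<integral>x. (1 + \<bar>x\<bar>) powr (-a) \<partial>lborel)"
  define I\<mu> where "I\<mu> = (\<integral>x. (1 + \<bar>x\<bar>) powr (-\<mu>) \<partial>lborel)"
  have "integrable lborel (\<lambda>x. (1 + \<bar>m - x\<bar>) powr (-\<mu>) * (1 + \<bar>x\<bar>) powr (-a)) \<and>
     (1 + \<bar>m\<bar>) powr a * (\<integral>x. (1 + \<bar>m - x\<bar>) powr (-\<mu>) * (1 + \<bar>x\<bar>) powr (-a) \<partial>lborel) \<le> 2 powr a * (Ia + I\<mu>)"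
    for m :: real
  proof
    have i1: "integrable lborel (\<lambda>x::real. (1 + \<bar>m - x\<bar>) powr (-\<mu>))" using decay_shift(1) assms by auto
    have i2: "integrable lborel (\<lambda>x::real. (1 + \<bar>x\<bar>) powr (-a))" using integrable_decay assms by auto
    show ig: "integrable lborel (\<lambda>x. (1 + \<bar>m - x\<bar>) powr (-\<mu>) * (1 + \<bar>x\<bar>) powr (-a))"
    proof (rule Bochner_Integration.integrable_bound[OF i1])
      show "(\<lambda>x. (1 + \<bar>m - x\<bar>) powr (-\<mu>) * (1 + \<bar>x\<bar>) powr (-a)) \<in> borel_measurable lborel" by measurable
      show "AE x in lborel. norm ((1 + \<bar>m - x\<bar>) powr (-\<mu>) * (1 + \<bar>x\<bar>) powr (-a)) \<le> norm ((1 + \<bar>m - x\<bar>) powr (-\<mu>))"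
      proof (rule AE_I2)
        fix x :: real
        have "(1 + \<bar>x\<bar>) powr (-a) \<le> 1" using assms powr_mono2'[of "-a" 1 "1 + \<bar>x\<bar>"] by simp
        then show "norm ((1 + \<bar>m - x\<bar>) powr (-\<mu>) * (1 + \<bar>x\<bar>) powr (-a)) \<le> norm ((1 + \<bar>m - x\<bar>) powr (-\<mu>))"
          by (simp add: mult_left_le)
      qed
    qed
    have "(1 + \<bar>m\<bar>) powr a * (\<integral>x. (1 + \<bar>m - x\<bar>) powr (-\<mu>) * (1 + \<bar>x\<bar>) powr (-a) \<partial>lborel)
        = (\<integral>x. (1 + \<bar>m\<bar>) powr a * ((1 + \<bar>m - x\<bar>) powr (-\<mu>) * (1 + \<bar>x\<bar>) powr (-a)) \<partial>lborel)"
      by simp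
    also have "\<dots> \<le> (\<integral>x. 2 powr a * ((1 + \<bar>x\<bar>) powr (-a) + (1 + \<bar>m - x\<bar>) powr (-\<mu>)) \<partial>lborel)"
      using ig i1 i2 assms by (intro integral_mono conv_pointwise) auto
    also have "\<dots> = 2 powr a * (Ia + I\<mu>)"
      using i1 i2 decay_shift(2)[of \<mu> m] assms by (simp add: Ia_def I\<mu>_def)
    finally show "(1 + \<bar>m\<bar>) powr a * (\<integral>x. (1 + \<bar>m - x\<bar>) powr (-\<mu>) * (1 + \<bar>x\<bar>) powr (-a) \<partial>lborel) \<le> 2 powr a * (Ia + I\<mu>)" .
  qed
  then show ?thesis by blast
qed


lemma ln_ratio:
  fixes v w e :: real
  assumes "w > 0" "\<bar>v - w\<bar> \<le> e" "2 * e \<le> w"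
  shows "\<bar>ln v - ln w\<bar> \<le> 2 * e / w"
proof -
  define y where "y = (v - w) / w"
  have y: "\<bar>y\<bar> \<le> e / w" using assms by (simp add: y_def abs_divide divide_right_mono)
  have "e / w \<le> 1/2" using assms by (simp add: divide_le_eq)
  then have y2: "\<bar>y\<bar> \<le> 1/2" using y by linarith
  have v: "v = w * (1 + y)" using assms(1) by (simp add: y_def field_simps)
  have "1 + y > 0" using y2 by auto
  then have "ln v - ln w = ln (1 + y)" using v assms(1) by (simp add: ln_mult)
  moreover have "\<bar>ln (1 + y) - y\<bar> \<le> 2 * y\<^sup>2" using y2 by (rule abs_ln_one_plus_x_minus_x_bound)
  moreover have "2 * y\<^sup>2 \<le> \<bar>y\<bar>"
  proof -
    have "2 * y\<^sup>2 = (2 * \<bar>y\<bar>) * \<bar>y\<bar>" by (simp add: power2_eq_square)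
    also have "\<dots> \<le> 1 * \<bar>y\<bar>" using y2 by (intro mult_right_mono) auto
    finally show ?thesis by simp
  qed
  ultimately have "\<bar>ln v - ln w\<bar> \<le> 2 * \<bar>y\<bar>" by linarith
  also have "\<dots> \<le> 2 * e / w" using y by simp
  finally show ?thesis .
qed

lemma tau_est:
  fixes hh A ld e D \<alpha> :: real
  assumes A: "A > 0" and ldp: "ld \<ge> 0" and hA: "hh \<le> 2 * A * ld" and hh: "hh \<ge> 0"
    and D: "D > 0" and e: "e \<ge> 0"
  shows "\<exists>K. \<forall>u v. u \<ge> D \<longrightarrow> v \<ge> D \<longrightarrow> \<bar>v - exp (-ld) * u\<bar> \<le> e \<longrightarrow>
     hh * ln (u + e) - A * ((ln u)\<^sup>2 - (ln v)\<^sup>2) - \<alpha> * (ln u - ln v) \<le> K"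
proof -
  define s where "s = exp (-ld)"
  have s0: "s > 0" and s1: "s \<le> 1" using ldp by (auto simp: s_def)
  define U0 where "U0 = max 1 (max e (2 * e / s))"
  have U01: "U0 \<ge> 1" and U0e: "U0 \<ge> e" and U0s: "U0 \<ge> 2 * e / s" by (auto simp: U0_def)
  define M where "M = \<bar>ln D\<bar> + \<bar>ln (U0 + e)\<bar>"
  define K1 where "K1 = hh * ln (U0 + e) + A * M\<^sup>2 + 2 * \<bar>\<alpha>\<bar> * M"
  define C1 where "C1 = ld\<^sup>2 + 2 * ld + 4 * e / s + 1"
  define K2 where "K2 = hh * ln 2 + A * C1 + \<bar>\<alpha>\<bar> * (ld + 1)"
  have main: "hh * ln (u + e) - A * ((ln u)\<^sup>2 - (ln v)\<^sup>2) - \<alpha> * (ln u - ln v) \<le> max K1 K2"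
    if u: "u \<ge> D" and v: "v \<ge> D" and uv: "\<bar>v - s * u\<bar> \<le> e" for u v
  proof (cases "u \<le> U0")
    case True
    have "s * u \<le> u" using s1 s0 u D by (intro mult_left_le_one_le) auto
    then have vle: "v \<le> U0 + e" using uv True by (auto simp: abs_le_iff)
    have lnb: "\<bar>ln x\<bar> \<le> M" if "D \<le> x" "x \<le> U0 + e" for x
    proof -
      have "ln D \<le> ln x" "ln x \<le> ln (U0 + e)" using that D by auto
      then show ?thesis unfolding M_def by linarith
    qed
    have lu: "\<bar>ln u\<bar> \<le> M" using lnb u True e by auto
    have lv: "\<bar>ln v\<bar> \<le> M" using lnb v vle by auto
    have t1: "hh * ln (u + e) \<le> hh * ln (U0 + e)" using hh True u D e by (intro mult_left_mono) auto
    have "(ln v)\<^sup>2 \<le> M\<^sup>2" using lv by (metis abs_le_square_iff abs_of_nonneg abs_ge_zero order_trans power2_abs)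
    then have "A * (ln v)\<^sup>2 \<le> A * M\<^sup>2" using A by (intro mult_left_mono) auto
    moreover have "0 \<le> A * (ln u)\<^sup>2" using A by simp
    moreover have "- A * ((ln u)\<^sup>2 - (ln v)\<^sup>2) = A * (ln v)\<^sup>2 - A * (ln u)\<^sup>2" by (simp add: algebra_simps)
    ultimately have t2: "- A * ((ln u)\<^sup>2 - (ln v)\<^sup>2) \<le> A * M\<^sup>2" by linarith
    have t3: "- \<alpha> * (ln u - ln v) \<le> 2 * \<bar>\<alpha>\<bar> * M"
    proof -
      have "- \<alpha> * (ln u - ln v) \<le> \<bar>\<alpha>\<bar> * \<bar>ln u - ln v\<bar>" by (simp add: abs_mult[symmetric])
      also have "\<dots> \<le> \<bar>\<alpha>\<bar> * (2 * M)" using lu lv by (intro mult_left_mono) auto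
      finally show ?thesis by simp
    qed
    have "hh * ln (u + e) - A * ((ln u)\<^sup>2 - (ln v)\<^sup>2) - \<alpha> * (ln u - ln v) \<le> K1"
      using t1 t2 t3 unfolding K1_def by linarith
    then show ?thesis by simp
  next
    case False
    then have u1: "u \<ge> 1" and ue: "u \<ge> e"
      using U01 U0e by auto
    have "2 * e \<le> U0 * s" using U0s s0 by (simp add: pos_divide_le_eq)
    moreover have "U0 * s \<le> u * s" using False s0 by (intro mult_right_mono) auto
    ultimately have us: "s * u \<ge> 2 * e" by (simp add: mult.commute)
    have u0: "u > 0" using u1 by simp
    have su0: "s * u > 0" using s0 u0 by simp
    define \<epsilon> where "\<epsilon> = ln v - ln (s * u)"
    have eps: "\<bar>\<epsilon>\<bar> \<le> 2 * e / (s * u)" unfolding \<epsilon>_def using su0 uv us by (intro ln_ratio) auto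
    have "2 * e / (s * u) \<le> 1" using us su0 by (simp add: divide_le_eq)
    then have eps1: "\<bar>\<epsilon>\<bar> \<le> 1" using eps by linarith
    have lnsu: "ln (s * u) = ln u - ld" using s0 u0 by (simp add: ln_mult s_def)
    have lv: "ln v = ln u - ld + \<epsilon>" using lnsu by (simp add: \<epsilon>_def)
    have lu0: "ln u \<ge> 0" using u1 by simp
    have lnu_le: "ln u \<le> u" using u0 by (simp add: less_imp_le)
    have epsln: "\<bar>\<epsilon>\<bar> * ln u \<le> 2 * e / s"
    proof -
      have "\<bar>\<epsilon>\<bar> * ln u \<le> 2 * e / (s * u) * u" using eps lu0 lnu_le
        by (meson abs_ge_zero mult_mono order_trans)
      also have "\<dots> = 2 * e / s" using u0 by simp
      finally show ?thesis .
    qed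
    have diff: "(ln u)\<^sup>2 - (ln v)\<^sup>2 = 2 * ld * ln u - ld\<^sup>2 + 2 * ld * \<epsilon> - 2 * \<epsilon> * ln u - \<epsilon>\<^sup>2"
      unfolding lv by (simp add: power2_eq_square algebra_simps)
    have "ld * (-1) \<le> ld * \<epsilon>" using eps1 ldp by (intro mult_left_mono) (auto simp: abs_le_iff)
    then have "2 * ld * \<epsilon> \<ge> - 2 * ld" by linarith
    moreover have "2 * \<epsilon> * ln u \<le> 4 * e / s"
    proof -
      have "\<epsilon> * ln u \<le> \<bar>\<epsilon>\<bar> * ln u" using lu0 by (intro mult_right_mono) auto
      then show ?thesis using epsln by linarith
    qed
    moreover have "\<epsilon>\<^sup>2 \<le> 1"
    proof -
      have "\<epsilon>\<^sup>2 = \<bar>\<epsilon>\<bar> * \<bar>\<epsilon>\<bar>" by (simp add: power2_eq_square)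
      also have "\<dots> \<le> 1 * 1" using eps1 by (intro mult_mono) auto
      finally show ?thesis by simp
    qed
    ultimately have dlow: "(ln u)\<^sup>2 - (ln v)\<^sup>2 \<ge> 2 * ld * ln u - C1"
      unfolding diff C1_def by linarith
    have t1: "hh * ln (u + e) \<le> hh * ln 2 + hh * ln u"
    proof -
      have "ln (u + e) \<le> ln (2 * u)" using ue e u0 by auto
      also have "\<dots> = ln 2 + ln u" using u0 by (simp add: ln_mult)
      finally show ?thesis using hh by (metis distrib_left mult_left_mono)
    qed
    have t2: "- A * ((ln u)\<^sup>2 - (ln v)\<^sup>2) \<le> - hh * ln u + A * C1"
    proof -
      have "- A * ((ln u)\<^sup>2 - (ln v)\<^sup>2) \<le> - A * (2 * ld * ln u - C1)"
        using dlow A by (simp add: mult_left_mono)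
      also have "\<dots> = - (2 * A * ld) * ln u + A * C1" by (simp add: algebra_simps)
      also have "\<dots> \<le> - hh * ln u + A * C1" using hA lu0 by (simp add: mult_right_mono)
      finally show ?thesis .
    qed
    have t3: "- \<alpha> * (ln u - ln v) \<le> \<bar>\<alpha>\<bar> * (ld + 1)"
    proof -
      have "ln u - ln v = ld - \<epsilon>" using lv by simp
      then have "\<bar>ln u - ln v\<bar> \<le> ld + 1" using eps1 ldp by auto
      moreover have "- \<alpha> * (ln u - ln v) \<le> \<bar>\<alpha>\<bar> * \<bar>ln u - ln v\<bar>" by (simp add: abs_mult[symmetric])
      moreover have "\<bar>\<alpha>\<bar> * \<bar>ln u - ln v\<bar> \<le> \<bar>\<alpha>\<bar> * (ld + 1)"
        using calculation(1) by (intro mult_left_mono) auto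
      ultimately show ?thesis by linarith
    qed
    have "hh * ln (u + e) - A * ((ln u)\<^sup>2 - (ln v)\<^sup>2) - \<alpha> * (ln u - ln v) \<le> K2"
      using t1 t2 t3 unfolding K2_def by linarith
    then show ?thesis by simp
  qed
  show ?thesis unfolding s_def[symmetric] using main by blast
qed


definition wtau :: "real \<Rightarrow> real \<Rightarrow> real \<Rightarrow> real \<Rightarrow> complex \<Rightarrow> real" where
  "wtau q \<delta> \<kappa> \<alpha> \<tau> = exp (- (\<kappa> / 2) * (ln (cmod (\<tau> + complex_of_real \<delta>)))\<^sup>2 / ln q
          - \<alpha> * ln (cmod (\<tau> + complex_of_real \<delta>)))"

lemma exp_weight_split:
  "exp_weight q \<delta> \<kappa> \<beta> \<mu> \<alpha> \<tau> m = (1 + \<bar>m\<bar>) powr \<mu> * exp (\<beta> * \<bar>m\<bar>) * wtau q \<delta> \<kappa> \<alpha> \<tau>"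
  by (simp add: exp_weight_def wtau_def)

lemma tau_bound:
  fixes q \<kappa> \<alpha> \<delta> Dd :: real and k h :: nat and S :: "complex set"
  assumes q: "q > 1" and k: "k > 0" and \<kappa>: "real k \<le> \<kappa>" and Dd: "Dd > 0"
    and SD: "\<And>\<tau>. \<tau> \<in> S \<Longrightarrow> Dd \<le> cmod (\<tau> + complex_of_real \<delta>)"
    and Ssc: "\<And>\<tau> s. \<tau> \<in> S \<Longrightarrow> 0 < s \<Longrightarrow> s \<le> 1 \<Longrightarrow> complex_of_real s * \<tau> \<in> S"
  shows "\<exists>K. \<forall>\<tau>\<in>S. cmod (\<tau> ^ h / complex_of_real ((q powr (1 / real k)) powr (real h * (real h - 1) / 2)))
            * wtau q \<delta> \<kappa> \<alpha> \<tau> \<le> K * wtau q \<delta> \<kappa> \<alpha> (complex_of_real (q powr (- real h / real k)) * \<tau>)"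
proof -
  define A where "A = \<kappa> / (2 * ln q)"
  define ld where "ld = real h * ln q / real k"
  have lq: "ln q > 0" using q by simp
  have kpos: "real k > 0" using k by simp
  have A0: "A > 0" using lq \<kappa> kpos unfolding A_def by simp
  have ld0: "ld \<ge> 0" using lq kpos by (simp add: ld_def)
  have hA: "real h \<le> 2 * A * ld"
  proof -
    have "2 * A * ld = \<kappa> / real k * real h" using lq kpos by (simp add: A_def ld_def field_simps)
    moreover have "\<kappa> / real k \<ge> 1" using \<kappa> kpos by simp
    ultimately show ?thesis by (metis mult_le_cancel_right1 of_nat_0_le_iff mult.commute order_trans
          mult_right_mono mult_1_left)
  qed
  obtain K0 where K0: "\<And>u v. u \<ge> Dd \<Longrightarrow> v \<ge> Dd \<Longrightarrow> \<bar>v - exp (-ld) * u\<bar> \<le> \<bar>\<delta>\<bar> \<Longrightarrow>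
     real h * ln (u + \<bar>\<delta>\<bar>) - A * ((ln u)\<^sup>2 - (ln v)\<^sup>2) - \<alpha> * (ln u - ln v) \<le> K0"
    using tau_est[OF A0 ld0 hA _ Dd, of "\<bar>\<delta>\<bar>" \<alpha>] by auto
  define s where "s = q powr (- real h / real k)"
  have s_exp: "s = exp (-ld)" unfolding s_def ld_def using q by (simp add: powr_def)
  have s0: "s > 0" and s1: "s \<le> 1" using ld0 by (auto simp: s_exp)
  have wt: "wtau q \<delta> \<kappa> \<alpha> z = exp (- A * (ln (cmod (z + complex_of_real \<delta>)))\<^sup>2 - \<alpha> * ln (cmod (z + complex_of_real \<delta>)))" for z
    unfolding wtau_def A_def using lq by (simp add: field_simps)
  have "cmod (\<tau> ^ h / complex_of_real ((q powr (1 / real k)) powr (real h * (real h - 1) / 2)))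
            * wtau q \<delta> \<kappa> \<alpha> \<tau> \<le> exp K0 * wtau q \<delta> \<kappa> \<alpha> (complex_of_real s * \<tau>)" if \<tau>: "\<tau> \<in> S" for \<tau>
  proof -
    define u where "u = cmod (\<tau> + complex_of_real \<delta>)"
    define v where "v = cmod (complex_of_real s * \<tau> + complex_of_real \<delta>)"
    have uD: "u \<ge> Dd" using SD[OF \<tau>] by (simp add: u_def)
    have vD: "v \<ge> Dd" using SD[OF Ssc[OF \<tau> s0 s1]] by (simp add: v_def)
    have u0: "u > 0" using uD Dd by simp
    have uv: "\<bar>v - exp (-ld) * u\<bar> \<le> \<bar>\<delta>\<bar>"
    proof -
      have "exp (-ld) * u = cmod (complex_of_real s * (\<tau> + complex_of_real \<delta>))"
        using s0 by (simp add: u_def s_exp norm_mult)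
      then have "\<bar>v - exp (-ld) * u\<bar> \<le> cmod ((complex_of_real s * \<tau> + complex_of_real \<delta>) - complex_of_real s * (\<tau> + complex_of_real \<delta>))"
        unfolding v_def by (simp add: norm_triangle_ineq3)
      also have "\<dots> = cmod (complex_of_real ((1 - s) * \<delta>))" by (simp add: algebra_simps)
      also have "\<dots> = \<bar>(1 - s) * \<delta>\<bar>" by (rule norm_of_real)
      also have "\<dots> = (1 - s) * \<bar>\<delta>\<bar>" using s1 by (simp add: abs_mult)
      also have "\<dots> \<le> \<bar>\<delta>\<bar>" using s0 s1 by (intro mult_left_le_one_le) auto
      finally show ?thesis .
    qed
    have key: "real h * ln (u + \<bar>\<delta>\<bar>) - A * ((ln u)\<^sup>2 - (ln v)\<^sup>2) - \<alpha> * (ln u - ln v) \<le> K0"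
      using K0[OF uD vD uv] .
    define c where "c = (q powr (1 / real k)) powr (real h * (real h - 1) / 2)"
    have c1: "c \<ge> 1"
    proof -
      have "q powr (1 / real k) \<ge> 1" using q kpos by (simp add: ge_one_powr_ge_zero)
      moreover have "real h * (real h - 1) / 2 \<ge> 0" by (cases h) auto
      ultimately show ?thesis unfolding c_def by (simp add: ge_one_powr_ge_zero)
    qed
    have "cmod (\<tau> ^ h / complex_of_real c) = cmod \<tau> ^ h / c" using c1 by (simp add: norm_divide norm_power)
    also have "\<dots> \<le> cmod \<tau> ^ h" using c1 by (simp add: divide_le_eq mult_le_cancel_left1 order_trans[OF _ mult_right_mono])
    also have "\<dots> \<le> (u + \<bar>\<delta>\<bar>) ^ h"
    proof (rule power_mono)
      have "cmod \<tau> \<le> cmod (\<tau> + complex_of_real \<delta>) + cmod (complex_of_real \<delta>)"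
        by (metis add_diff_cancel_right' norm_triangle_ineq4)
      then show "cmod \<tau> \<le> u + \<bar>\<delta>\<bar>" by (simp add: u_def)
    qed simp
    also have "\<dots> = exp (real h * ln (u + \<bar>\<delta>\<bar>))" using u0 by (simp add: exp_of_nat_mult)
    finally have t1: "cmod (\<tau> ^ h / complex_of_real c) \<le> exp (real h * ln (u + \<bar>\<delta>\<bar>))" .
    have "cmod (\<tau> ^ h / complex_of_real c) * wtau q \<delta> \<kappa> \<alpha> \<tau>
        \<le> exp (real h * ln (u + \<bar>\<delta>\<bar>)) * exp (- A * (ln u)\<^sup>2 - \<alpha> * ln u)"
    proof -
      have wtt: "wtau q \<delta> \<kappa> \<alpha> \<tau> = exp (- A * (ln u)\<^sup>2 - \<alpha> * ln u)" using wt[of \<tau>] by (simp add: u_def)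
      show ?thesis unfolding wtt using t1 by (intro mult_right_mono) auto
    qed
    also have "\<dots> = exp (real h * ln (u + \<bar>\<delta>\<bar>) - A * (ln u)\<^sup>2 - \<alpha> * ln u)" by (simp add: exp_add[symmetric])
    also have "\<dots> \<le> exp (K0 - A * (ln v)\<^sup>2 - \<alpha> * ln v)" using key by (simp add: algebra_simps)
    also have "\<dots> = exp K0 * wtau q \<delta> \<kappa> \<alpha> (complex_of_real s * \<tau>)"
    proof -
      have wtt: "wtau q \<delta> \<kappa> \<alpha> (complex_of_real s * \<tau>) = exp (- A * (ln v)\<^sup>2 - \<alpha> * ln v)"
        using wt[of "complex_of_real s * \<tau>"] by (simp add: v_def)
      show ?thesis unfolding wtt by (simp add: exp_add[symmetric] algebra_simps)
    qed
    finally show ?thesis unfolding c_def .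
  qed
  then show ?thesis unfolding s_def by blast
qed


lemma cont_meas: "continuous_on UNIV (h :: real \<Rightarrow> 'b::{banach,second_countable_topology}) \<Longrightarrow> h \<in> borel_measurable lborel"
  by (simp add: borel_measurable_continuous_onI)

lemma cont_slice:
  assumes "continuous_on (S \<times> UNIV) (\<lambda>p. F (fst p) (snd p))" "\<tau> \<in> S"
  shows "continuous_on UNIV (\<lambda>x::real. F \<tau> x)"
proof -
  have "continuous_on UNIV (\<lambda>x::real. (\<tau>, x))" by (intro continuous_intros)
  moreover have "(\<lambda>x::real. (\<tau>, x)) ` UNIV \<subseteq> S \<times> UNIV" using assms(2) by auto
  moreover have "continuous_on ((\<lambda>x::real. (\<tau>, x)) ` UNIV) (\<lambda>p. F (fst p) (snd p))"
    using assms(1) calculation(2) by (rule continuous_on_subset)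
  ultimately have "continuous_on UNIV ((\<lambda>p. F (fst p) (snd p)) \<circ> (\<lambda>x::real. (\<tau>, x)))"
    by (intro continuous_on_compose) auto
  then show ?thesis by (simp add: o_def)
qed

lemma integrable_by_bound:
  fixes h :: "real \<Rightarrow> complex"
  assumes "integrable lborel g" "h \<in> borel_measurable lborel" "\<And>x. cmod (h x) \<le> K * g x"
  shows "integrable lborel h"
proof (rule Bochner_Integration.integrable_bound[where f="\<lambda>x. K * g x"])
  show "integrable lborel (\<lambda>x. K * g x)" using assms(1) by simp
  show "h \<in> borel_measurable lborel" by fact
  show "AE x in lborel. norm (h x) \<le> norm (K * g x)"
    using assms(3) by (intro AE_I2) (metis abs_ge_self order_trans real_norm_def)
qed

lemma param_cont:
  fixes F :: "complex \<Rightarrow> real \<Rightarrow> complex" and c :: "real \<Rightarrow> complex"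
  assumes contF: "continuous_on (S \<times> UNIV) (\<lambda>p. F (fst p) (snd p))"
    and bound: "\<And>\<tau> x. \<tau> \<in> S \<Longrightarrow> cmod (F \<tau> x) \<le> W \<tau> * g x"
    and contW: "continuous_on S W"
    and gi: "integrable lborel g" and g0: "\<And>x. g x \<ge> 0"
    and contc: "continuous_on UNIV c" and cb: "\<And>y. cmod (c y) \<le> Bc"
  shows "continuous_on (S \<times> UNIV) (\<lambda>p. LINT x|lborel. c (snd p - x) * F (fst p) x)"
proof (rule continuous_on_sequentiallyI)
  fix u :: "nat \<Rightarrow> complex \<times> real" and p0
  assume uS: "\<forall>n. u n \<in> S \<times> UNIV" and p0S: "p0 \<in> S \<times> UNIV" and lim: "u \<longlonglongrightarrow> p0"
  define \<tau>0 where "\<tau>0 = fst p0"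
  define m0 where "m0 = snd p0"
  have \<tau>0S: "\<tau>0 \<in> S" using p0S by (auto simp: \<tau>0_def)
  have \<tau>nS: "fst (u n) \<in> S" for n using uS by (auto simp: mem_Times_iff)
  have lim1: "(\<lambda>n. fst (u n)) \<longlonglongrightarrow> \<tau>0" using lim unfolding \<tau>0_def by (intro tendsto_intros)
  have lim2: "(\<lambda>n. snd (u n)) \<longlonglongrightarrow> m0" using lim unfolding m0_def by (intro tendsto_intros)
  have "(\<lambda>n. W (fst (u n))) \<longlonglongrightarrow> W \<tau>0"
    by (rule continuous_on_tendsto_compose[OF contW lim1 \<tau>0S]) (simp add: \<tau>nS)
  then have "Bseq (\<lambda>n. W (fst (u n)))" by (intro convergent_imp_Bseq convergentI)
  then obtain K where K: "K > 0" "\<And>n. norm (W (fst (u n))) \<le> K" by (auto elim!: BseqE)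
  have Bc0: "Bc \<ge> 0" using cb[of 0] norm_ge_zero[of "c 0"] by linarith
  have meas: "(\<lambda>x. c (m - x) * F \<tau> x) \<in> borel_measurable lborel" if "\<tau> \<in> S" for m \<tau>
  proof (rule cont_meas)
    have "continuous_on UNIV (\<lambda>x::real. c (m - x))"
      by (rule continuous_on_compose2[OF contc]) (auto intro!: continuous_intros)
    then show "continuous_on UNIV (\<lambda>x. c (m - x) * F \<tau> x)"
      using cont_slice[OF contF that] by (intro continuous_intros)
  qed
  have "(\<lambda>n. LINT x|lborel. c (snd (u n) - x) * F (fst (u n)) x) \<longlonglongrightarrow> (LINT x|lborel. c (m0 - x) * F \<tau>0 x)"
  proof (rule integral_dominated_convergence[where w="\<lambda>x. Bc * K * g x"])
    show "(\<lambda>x. c (m0 - x) * F \<tau>0 x) \<in> borel_measurable lborel" using meas \<tau>0S by blast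
    show "\<And>n. (\<lambda>x. c (snd (u n) - x) * F (fst (u n)) x) \<in> borel_measurable lborel" using meas \<tau>nS by blast
    show "integrable lborel (\<lambda>x. Bc * K * g x)" using gi by simp
    show "AE x in lborel. (\<lambda>n. c (snd (u n) - x) * F (fst (u n)) x) \<longlonglongrightarrow> c (m0 - x) * F \<tau>0 x"
    proof (rule AE_I2)
      fix x :: real
      have "(\<lambda>n. c (snd (u n) - x)) \<longlonglongrightarrow> c (m0 - x)"
        by (rule continuous_on_tendsto_compose[OF contc]) (auto intro: tendsto_intros lim2)
      moreover have "(\<lambda>n. F (fst (u n)) x) \<longlonglongrightarrow> F \<tau>0 x"
      proof -
        have "(\<lambda>n. (fst (u n), x)) \<longlonglongrightarrow> (\<tau>0, x)" using lim1 by (intro tendsto_intros)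
        then have "(\<lambda>n. (\<lambda>p. F (fst p) (snd p)) (fst (u n), x)) \<longlonglongrightarrow> (\<lambda>p. F (fst p) (snd p)) (\<tau>0, x)"
          by (rule continuous_on_tendsto_compose[OF contF]) (auto simp: \<tau>0S \<tau>nS)
        then show ?thesis by simp
      qed
      ultimately show "(\<lambda>n. c (snd (u n) - x) * F (fst (u n)) x) \<longlonglongrightarrow> c (m0 - x) * F \<tau>0 x"
        by (intro tendsto_intros)
    qed
    show "AE x in lborel. norm (c (snd (u n) - x) * F (fst (u n)) x) \<le> Bc * K * g x" for n
    proof (rule AE_I2)
      fix x
      have "cmod (F (fst (u n)) x) \<le> W (fst (u n)) * g x" using bound \<tau>nS by blast
      also have "\<dots> \<le> K * g x" using K(2)[of n] g0[of x] by (intro mult_right_mono) auto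
      finally have "cmod (F (fst (u n)) x) \<le> K * g x" .
      then have "cmod (c (snd (u n) - x)) * cmod (F (fst (u n)) x) \<le> Bc * (K * g x)"
        using cb Bc0 by (intro mult_mono) auto
      then show "norm (c (snd (u n) - x) * F (fst (u n)) x) \<le> Bc * K * g x"
        by (simp add: norm_mult mult.assoc)
    qed
  qed
  then show "(\<lambda>n. (\<lambda>p. LINT x|lborel. c (snd p - x) * F (fst p) x) (u n)) \<longlonglongrightarrow>
             (\<lambda>p. LINT x|lborel. c (snd p - x) * F (fst p) x) p0"
    by (simp add: \<tau>0_def m0_def)
qed

lemma deriv_bound_local:
  fixes F :: "complex \<Rightarrow> complex"
  assumes hol: "F holomorphic_on Op" and Op: "open Op" and r: "r > 0" and sub: "cball \<tau>0 (2 * r) \<subseteq> Op"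
    and Fb: "\<And>w. w \<in> cball \<tau>0 (2 * r) \<Longrightarrow> cmod (F w) \<le> B"
  shows "\<And>w. w \<in> ball \<tau>0 r \<Longrightarrow> cmod (F w - F \<tau>0) \<le> B / r * cmod (w - \<tau>0)"
proof -
  have db: "cmod (deriv F z) \<le> B / r" if z: "z \<in> ball \<tau>0 r" for z
  proof -
    have sub2: "cball z r \<subseteq> cball \<tau>0 (2 * r)"
    proof
      fix y assume "y \<in> cball z r"
      then have "dist z y \<le> r" by simp
      moreover have "dist \<tau>0 z < r" using z by simp
      ultimately have "dist \<tau>0 y \<le> 2 * r" using dist_triangle[of \<tau>0 y z] by linarith
      then show "y \<in> cball \<tau>0 (2 * r)" by simp
    qed
    have "cmod ((deriv ^^ 1) F z) \<le> fact 1 * B / r ^ 1"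
    proof (rule Cauchy_inequality)
      show "F holomorphic_on ball z r" using hol sub sub2 ball_subset_cball by (meson holomorphic_on_subset subset_trans)
      show "continuous_on (cball z r) F" using hol sub sub2
        by (meson holomorphic_on_imp_continuous_on holomorphic_on_subset subset_trans)
      show "0 < r" by fact
      show "\<And>x. cmod (z - x) = r \<Longrightarrow> cmod (F x) \<le> B"
        using sub2 Fb by (simp add: dist_norm subset_iff)
    qed
    then show ?thesis by simp
  qed
  fix w assume w: "w \<in> ball \<tau>0 r"
  have "cmod (F w - F \<tau>0) \<le> B / r * cmod (w - \<tau>0)"
  proof (rule field_differentiable_bound[where S="ball \<tau>0 r" and f'="deriv F"])
    show "convex (ball \<tau>0 r)" by simp
    show "(F has_field_derivative deriv F z) (at z within ball \<tau>0 r)" if "z \<in> ball \<tau>0 r" for z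
    proof (rule holomorphic_derivI[OF hol Op])
      have "z \<in> cball \<tau>0 (2 * r)" using that r by simp
      then show "z \<in> Op" using sub by auto
    qed
    show "\<And>z. z \<in> ball \<tau>0 r \<Longrightarrow> cmod (deriv F z) \<le> B / r" using db by blast
    show "w \<in> ball \<tau>0 r" by fact
    show "\<tau>0 \<in> ball \<tau>0 r" using r by simp
  qed
  then show "cmod (F w - F \<tau>0) \<le> B / r * cmod (w - \<tau>0)" .
qed

lemma param_holo:
  fixes F :: "complex \<Rightarrow> real \<Rightarrow> complex" and c :: "real \<Rightarrow> complex"
  assumes contF: "continuous_on (S \<times> UNIV) (\<lambda>p. F (fst p) (snd p))"
    and holF: "\<And>x. (\<lambda>\<tau>. F \<tau> x) holomorphic_on Op" and Op: "open Op" "Op \<subseteq> S"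
    and bound: "\<And>\<tau> x. \<tau> \<in> S \<Longrightarrow> cmod (F \<tau> x) \<le> W \<tau> * g x"
    and contW: "continuous_on S W"
    and gi: "integrable lborel g" and g0: "\<And>x. g x \<ge> 0"
    and contc: "continuous_on UNIV c" and cb: "\<And>y. cmod (c y) \<le> Bc"
  shows "(\<lambda>\<tau>. LINT x|lborel. c (m - x) * F \<tau> x) holomorphic_on Op"
proof -
  define G where "G \<tau> = (LINT x|lborel. c (m - x) * F \<tau> x)" for \<tau>
  have Bc0: "Bc \<ge> 0" using cb[of 0] norm_ge_zero[of "c 0"] by linarith
  have contcm: "continuous_on UNIV (\<lambda>x::real. c (m - x))"
    by (rule continuous_on_compose2[OF contc]) (auto intro!: continuous_intros)
  have meas: "(\<lambda>x. c (m - x) * F \<tau> x) \<in> borel_measurable lborel" if "\<tau> \<in> S" for \<tau>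
    using cont_slice[OF contF that] contcm by (intro cont_meas continuous_intros) auto
  have integ: "integrable lborel (\<lambda>x. c (m - x) * F \<tau> x)" if "\<tau> \<in> S" for \<tau>
  proof (rule integrable_by_bound[OF gi meas[OF that], where K="Bc * W \<tau>"])
    fix x
    have "cmod (c (m - x)) * cmod (F \<tau> x) \<le> Bc * (W \<tau> * g x)"
      using cb bound[OF that] Bc0 by (intro mult_mono) auto
    then show "cmod (c (m - x) * F \<tau> x) \<le> Bc * W \<tau> * g x" by (simp add: norm_mult mult.assoc)
  qed
  have "\<exists>f'. (G has_field_derivative f') (at \<tau>0)" if \<tau>0: "\<tau>0 \<in> Op" for \<tau>0
  proof -
    obtain e where e: "e > 0" "cball \<tau>0 e \<subseteq> Op" using Op(1) \<tau>0 open_contains_cball by blast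
    define r where "r = e / 2"
    have r: "r > 0" "cball \<tau>0 (2 * r) \<subseteq> Op" using e by (auto simp: r_def)
    have cS: "cball \<tau>0 (2 * r) \<subseteq> S" using r Op by auto
    have "compact (W ` cball \<tau>0 (2 * r))"
      using contW cS by (intro compact_continuous_image) (auto intro: continuous_on_subset)
    then obtain Wm where Wm: "\<And>z. z \<in> cball \<tau>0 (2 * r) \<Longrightarrow> norm (W z) \<le> Wm"
      using compact_imp_bounded bounded_iff by (metis imageI)
    have \<tau>0S: "\<tau>0 \<in> S" using \<tau>0 Op by auto
    have lip: "cmod (F w x - F \<tau>0 x) \<le> Wm * g x / r * cmod (w - \<tau>0)" if w: "w \<in> ball \<tau>0 r" for w x
    proof -
      have "cmod (F w x - F \<tau>0 x) \<le> (Wm * g x) / r * cmod (w - \<tau>0)"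
      proof (rule deriv_bound_local[OF holF Op(1) r])
        fix z assume z: "z \<in> cball \<tau>0 (2 * r)"
        have "cmod (F z x) \<le> W z * g x" using bound cS z by blast
        also have "\<dots> \<le> Wm * g x" using Wm[OF z] g0[of x] by (intro mult_right_mono) auto
        finally show "cmod (F z x) \<le> Wm * g x" .
      qed (use w in auto)
      then show ?thesis by simp
    qed
    define Fd where "Fd x = deriv (\<lambda>\<tau>. F \<tau> x) \<tau>0" for x
    have hasd: "((\<lambda>\<tau>. F \<tau> x) has_field_derivative Fd x) (at \<tau>0)" for x
      unfolding Fd_def using holF Op(1) \<tau>0 by (rule holomorphic_derivI)
    define L where "L = (LINT x|lborel. c (m - x) * Fd x)"
    have "((\<lambda>y. (G y - G \<tau>0) / (y - \<tau>0)) \<longlongrightarrow> L) (at \<tau>0)"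
    proof (subst tendsto_at_iff_sequentially, intro allI impI)
      fix X :: "nat \<Rightarrow> complex"
      assume Xne: "\<forall>i. X i \<in> UNIV - {\<tau>0}" and Xlim: "X \<longlonglongrightarrow> \<tau>0"
      from Xlim r(1) obtain N where N: "\<And>i. i \<ge> N \<Longrightarrow> dist (X i) \<tau>0 < r"
        by (meson LIMSEQ_iff_nz dist_norm)
      define Y where "Y i = X (i + N)" for i
      have Yb: "Y i \<in> ball \<tau>0 r" for i using N[of "i + N"] by (simp add: Y_def dist_commute)
      have Yne: "Y i \<noteq> \<tau>0" for i using Xne by (simp add: Y_def)
      have YS: "Y i \<in> S" for i using Yb[of i] cS r(1) by auto
      have Ylim: "Y \<longlonglongrightarrow> \<tau>0" using Xlim unfolding Y_def by (rule LIMSEQ_ignore_initial_segment)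
      have qlim: "(\<lambda>i. (F (Y i) x - F \<tau>0 x) / (Y i - \<tau>0)) \<longlonglongrightarrow> Fd x" for x
      proof -
        have "((\<lambda>y. (F y x - F \<tau>0 x) / (y - \<tau>0)) \<longlongrightarrow> Fd x) (at \<tau>0)"
          using hasd[of x] by (simp add: has_field_derivative_iff)
        then have "((\<lambda>y. (F y x - F \<tau>0 x) / (y - \<tau>0)) \<circ> Y) \<longlonglongrightarrow> Fd x"
          using Yne Ylim by (subst (asm) tendsto_at_iff_sequentially) auto
        then show ?thesis by (simp add: o_def)
      qed
      define s where "s i x = c (m - x) * ((F (Y i) x - F \<tau>0 x) / (Y i - \<tau>0))" for i x
      have smeas: "s i \<in> borel_measurable lborel" for i
        unfolding s_def using cont_slice[OF contF YS[of i]] cont_slice[OF contF \<tau>0S] contcm Yne[of i]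
        by (intro cont_meas continuous_intros) auto
      have Fdmeas: "Fd \<in> borel_measurable lborel"
      proof (rule borel_measurable_LIMSEQ_metric[where f="\<lambda>i x. (F (Y i) x - F \<tau>0 x) / (Y i - \<tau>0)"])
        show "(\<lambda>x. (F (Y i) x - F \<tau>0 x) / (Y i - \<tau>0)) \<in> borel_measurable lborel" for i
          using cont_slice[OF contF YS[of i]] cont_slice[OF contF \<tau>0S] Yne[of i]
          by (intro cont_meas continuous_intros) auto
        show "\<And>x. x \<in> space lborel \<Longrightarrow> (\<lambda>i. (F (Y i) x - F \<tau>0 x) / (Y i - \<tau>0)) \<longlonglongrightarrow> Fd x"
          using qlim by blast
      qed
      have "(\<lambda>i. integral\<^sup>L lborel (s i)) \<longlonglongrightarrow> (LINT x|lborel. c (m - x) * Fd x)"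
      proof (rule integral_dominated_convergence[where w="\<lambda>x. Bc * (Wm * g x / r)"])
        show "(\<lambda>x. c (m - x) * Fd x) \<in> borel_measurable lborel"
          by (rule borel_measurable_times[OF cont_meas[OF contcm] Fdmeas])
        show "\<And>i. s i \<in> borel_measurable lborel" by (rule smeas)
        show "integrable lborel (\<lambda>x. Bc * (Wm * g x / r))" using gi by simp
        show "AE x in lborel. (\<lambda>i. s i x) \<longlonglongrightarrow> c (m - x) * Fd x"
          unfolding s_def using qlim by (intro AE_I2 tendsto_intros)
        show "AE x in lborel. norm (s i x) \<le> Bc * (Wm * g x / r)" for i
        proof (rule AE_I2)
          fix x
          have "cmod ((F (Y i) x - F \<tau>0 x) / (Y i - \<tau>0)) \<le> Wm * g x / r"
          proof -
            have pos: "cmod (Y i - \<tau>0) > 0" using Yne[of i] by simp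
            have "cmod ((F (Y i) x - F \<tau>0 x) / (Y i - \<tau>0)) = cmod (F (Y i) x - F \<tau>0 x) / cmod (Y i - \<tau>0)"
              by (simp add: norm_divide)
            also have "\<dots> \<le> (Wm * g x / r * cmod (Y i - \<tau>0)) / cmod (Y i - \<tau>0)"
              using lip[OF Yb[of i], of x] pos by (intro divide_right_mono) auto
            also have "\<dots> = Wm * g x / r" using pos by simp
            finally show ?thesis .
          qed
          then have "cmod (c (m - x)) * cmod ((F (Y i) x - F \<tau>0 x) / (Y i - \<tau>0)) \<le> Bc * (Wm * g x / r)"
            using cb Bc0 by (intro mult_mono) auto
          then show "norm (s i x) \<le> Bc * (Wm * g x / r)" unfolding s_def norm_mult by simp
        qed
      qed
      moreover have "integral\<^sup>L lborel (s i) = (G (Y i) - G \<tau>0) / (Y i - \<tau>0)" for i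
      proof -
        have "integral\<^sup>L lborel (s i) = (LINT x|lborel. (c (m - x) * F (Y i) x - c (m - x) * F \<tau>0 x) / (Y i - \<tau>0))"
          unfolding s_def by (simp add: algebra_simps)
        also have "\<dots> = (LINT x|lborel. (c (m - x) * F (Y i) x - c (m - x) * F \<tau>0 x)) / (Y i - \<tau>0)"
          by (rule integral_divide_zero)
        also have "\<dots> = (G (Y i) - G \<tau>0) / (Y i - \<tau>0)"
          unfolding G_def using integ[OF YS[of i]] integ[OF \<tau>0S] by simp
        finally show ?thesis .
      qed
      ultimately have "(\<lambda>i. (G (X (i + N)) - G \<tau>0) / (X (i + N) - \<tau>0)) \<longlonglongrightarrow> L"
        by (simp add: L_def Y_def)
      then have "(\<lambda>i. (G (X i) - G \<tau>0) / (X i - \<tau>0)) \<longlonglongrightarrow> L" by (rule LIMSEQ_offset)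
      then show "((\<lambda>y. (G y - G \<tau>0) / (y - \<tau>0)) \<circ> X) \<longlonglongrightarrow> L" by (simp add: o_def)
    qed
    then have "(G has_field_derivative L) (at \<tau>0)" by (simp add: has_field_derivative_iff)
    then show ?thesis by blast
  qed
  then show ?thesis unfolding G_def[symmetric] using Op(1) by (simp add: holomorphic_on_open)
qed


lemma ptwise:
  fixes cv Fv fv Nc AQ Nf w \<beta> \<mu> m x :: real and n :: nat
  assumes cv0: "cv \<ge> 0" and fv0: "fv \<ge> 0" and w: "w > 0" and \<beta>: "\<beta> \<ge> 0" and AQ: "AQ \<ge> 0"
    and hc: "(1 + \<bar>m - x\<bar>) powr \<mu> * exp (\<beta> * \<bar>m - x\<bar>) * cv \<le> Nc"
    and hF: "0 \<le> Fv" "Fv \<le> AQ * (1 + \<bar>x\<bar>) ^ n * fv"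
    and hf: "(1 + \<bar>x\<bar>) powr \<mu> * exp (\<beta> * \<bar>x\<bar>) * w * fv \<le> Nf"
  shows "cv * Fv \<le> (Nc * AQ * Nf / w / exp (\<beta> * \<bar>m\<bar>)) * ((1 + \<bar>m - x\<bar>) powr (-\<mu>) * (1 + \<bar>x\<bar>) powr (-(\<mu> - real n)))"
proof -
  define A where "A = 1 + \<bar>m - x\<bar>"
  define B where "B = 1 + \<bar>x\<bar>"
  define Ea where "Ea = exp (\<beta> * \<bar>m - x\<bar>)"
  define Eb where "Eb = exp (\<beta> * \<bar>x\<bar>)"
  have A0: "A > 0" and B0: "B > 0" and Ea0: "Ea > 0" and Eb0: "Eb > 0" by (auto simp: A_def B_def Ea_def Eb_def)
  have cv: "cv \<le> Nc / (A powr \<mu> * Ea)" using hc A0 Ea0 by (simp add: A_def Ea_def field_simps mult.commute)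
  have fv: "fv \<le> Nf / (B powr \<mu> * Eb * w)" using hf B0 Eb0 w by (simp add: B_def Eb_def field_simps mult.commute)
  have Nc0: "Nc \<ge> 0" using hc cv0 A0 Ea0 by (smt (verit) mult_nonneg_nonneg powr_ge_zero exp_ge_zero A_def Ea_def)
  have Nf0: "Nf \<ge> 0" using hf fv0 B0 Eb0 w by (smt (verit) mult_nonneg_nonneg powr_ge_zero exp_ge_zero B_def Eb_def)
  have "cv * Fv \<le> (Nc / (A powr \<mu> * Ea)) * (AQ * B ^ n * (Nf / (B powr \<mu> * Eb * w)))"
  proof (rule mult_mono[OF cv])
    show "Fv \<le> AQ * B ^ n * (Nf / (B powr \<mu> * Eb * w))"
      using hF(2) fv AQ B0 unfolding B_def by (smt (verit) mult_left_mono zero_le_power mult_nonneg_nonneg)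
    show "0 \<le> Nc / (A powr \<mu> * Ea)" using Nc0 A0 Ea0 by simp
  qed (use hF in auto)
  also have "\<dots> = (Nc * AQ * Nf / w) * (A powr (-\<mu>) * (B ^ n / B powr \<mu>)) / (Ea * Eb)"
    using A0 B0 Ea0 Eb0 w by (simp add: powr_minus field_simps)
  also have "B ^ n / B powr \<mu> = B powr (-(\<mu> - real n))"
    using B0 by (simp add: powr_realpow[symmetric] powr_diff[symmetric] powr_minus_divide)
  also have "(Nc * AQ * Nf / w) * (A powr (-\<mu>) * B powr (-(\<mu> - real n))) / (Ea * Eb)
       \<le> (Nc * AQ * Nf / w) * (A powr (-\<mu>) * B powr (-(\<mu> - real n))) / exp (\<beta> * \<bar>m\<bar>)"
  proof (rule divide_left_mono)
    have "\<beta> * \<bar>m\<bar> \<le> \<beta> * \<bar>m - x\<bar> + \<beta> * \<bar>x\<bar>"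
      using \<beta> abs_triangle_ineq[of "m - x" x] by (simp add: distrib_left[symmetric] mult_left_mono)
    then show "exp (\<beta> * \<bar>m\<bar>) \<le> Ea * Eb" by (simp add: Ea_def Eb_def exp_add[symmetric])
    show "0 \<le> Nc * AQ * Nf / w * (A powr - \<mu> * B powr - (\<mu> - real n))" using Nc0 AQ Nf0 w by simp
    show "0 < Ea * Eb * exp (\<beta> * \<bar>m\<bar>)" using Ea0 Eb0 by simp
  qed
  finally show ?thesis by (simp add: A_def B_def)
qed


theorem proposition3:
  fixes q \<mu> \<alpha> \<rho> d a \<delta> \<kappa> :: real
    and k p1 :: nat
    and Q R :: "complex poly"
  assumes "q > 1" and "\<rho> > 0"
    and "0 < a" and "a < pi"
    and "infdist (- complex_of_real \<delta>) (sector d a \<union> ball 0 \<rho>) > 0"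
    and "degree R \<ge> degree Q"
    and "\<forall>m::real. poly R (\<i> * complex_of_real m) \<noteq> 0"
    and "\<mu> > real (degree Q) + 1"
    and "1 < k" and "real k \<le> \<kappa>"
  shows "\<exists>C :: nat \<Rightarrow> real. (\<forall>h\<in>{0..p1}. C h > 0) \<and>
    (\<forall>(\<beta>::real) (b :: real \<Rightarrow> complex) (c :: nat \<Rightarrow> real \<Rightarrow> complex) f.
       \<beta> > 0 \<longrightarrow> continuous_on UNIV b \<longrightarrow>
       (\<forall>m. cmod (b m) \<le> 1 / cmod (poly R (\<i> * complex_of_real m))) \<longrightarrow>
       (\<forall>h\<in>{0..p1}. c h \<in> E_space \<beta> \<mu>) \<longrightarrow>
       f \<in> Exp_space q (sector d a) \<delta> \<kappa> \<beta> \<mu> \<alpha> \<rho> \<longrightarrow>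
       (\<lambda>\<tau> m. b m * q_conv q k p1 c Q f \<tau> m) \<in> Exp_space q (sector d a) \<delta> \<kappa> \<beta> \<mu> \<alpha> \<rho> \<and>
       Exp_norm q (sector d a) \<delta> \<kappa> \<beta> \<mu> \<alpha> \<rho> (\<lambda>\<tau> m. b m * q_conv q k p1 c Q f \<tau> m)
         \<le> (\<Sum>h = 0..p1. C h * E_norm \<beta> \<mu> (c h)) * Exp_norm q (sector d a) \<delta> \<kappa> \<beta> \<mu> \<alpha> \<rho> f)"
proof -
  note q = assms(1) and \<rho> = assms(2) and degRQ = assms(6) and Rnz = assms(7) and \<mu> = assms(8)
    and k1 = assms(9) and \<kappa> = assms(10)
  define S where "S = sector d a \<union> cball 0 \<rho>"
  define Op where "Op = sector d a \<union> ball 0 \<rho>"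
  define Dd where "Dd = infdist (- complex_of_real \<delta>) (sector d a \<union> ball 0 \<rho>)"
  have Dd: "Dd > 0" using assms(5) by (simp add: Dd_def)
  have SD: "\<And>\<tau>. \<tau> \<in> S \<Longrightarrow> Dd \<le> cmod (\<tau> + complex_of_real \<delta>)"
    unfolding S_def Dd_def using \<rho> by (intro dist_bound) auto
  have Ssc: "\<And>\<tau> s. \<tau> \<in> S \<Longrightarrow> 0 < s \<Longrightarrow> s \<le> 1 \<Longrightarrow> complex_of_real s * \<tau> \<in> S"
    unfolding S_def by (rule dom_scale)
  have Opsc: "\<And>\<tau> s. \<tau> \<in> Op \<Longrightarrow> 0 < s \<Longrightarrow> s \<le> 1 \<Longrightarrow> complex_of_real s * \<tau> \<in> Op"
    unfolding Op_def by (rule dom_scale_open)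
  have Opopen: "open Op" unfolding Op_def using open_sector by auto
  have OpS: "Op \<subseteq> S" unfolding Op_def S_def by auto
  have Sne: "(0::complex) \<in> S" using \<rho> by (simp add: S_def)
  obtain AQ where AQ: "AQ > 0" "\<And>z. cmod (poly Q z) \<le> AQ * (1 + cmod z) ^ degree Q"
    using poly_upper[of Q] by blast
  obtain BR where BR: "BR > 0" "\<And>m::real. (1 + \<bar>m\<bar>) ^ degree Q / cmod (poly R (\<i> * complex_of_real m)) \<le> BR"
    using ratio_bound[OF degRQ Rnz] by blast
  define ae where "ae = \<mu> - real (degree Q)"
  have ae1: "ae > 1" and aemu: "ae \<le> \<mu>" and mu1: "\<mu> > 1" using \<mu> by (auto simp: ae_def)
  obtain Kc where Kc: "\<And>m::real. integrable lborel (\<lambda>x. (1 + \<bar>m - x\<bar>) powr (-\<mu>) * (1 + \<bar>x\<bar>) powr (-ae)) \<and>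
     (1 + \<bar>m\<bar>) powr ae * (\<integral>x. (1 + \<bar>m - x\<bar>) powr (-\<mu>) * (1 + \<bar>x\<bar>) powr (-ae) \<partial>lborel) \<le> Kc"
    using conv_est[OF mu1 ae1 aemu] by blast
  have "\<forall>h. \<exists>K. \<forall>\<tau>\<in>S. cmod (\<tau> ^ h / complex_of_real ((q powr (1 / real k)) powr (real h * (real h - 1) / 2)))
            * wtau q \<delta> \<kappa> \<alpha> \<tau> \<le> K * wtau q \<delta> \<kappa> \<alpha> (complex_of_real (q powr (- real h / real k)) * \<tau>)"
    using k1 by (intro allI tau_bound[OF q _ \<kappa> Dd SD Ssc]) auto
  then obtain Kt where Kt: "\<And>h \<tau>. \<tau> \<in> S \<Longrightarrow> cmod (\<tau> ^ h / complex_of_real ((q powr (1 / real k)) powr (real h * (real h - 1) / 2)))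
            * wtau q \<delta> \<kappa> \<alpha> \<tau> \<le> Kt h * wtau q \<delta> \<kappa> \<alpha> (complex_of_real (q powr (- real h / real k)) * \<tau>)"
    by metis
  define C where "C h = AQ * BR * max Kc 0 * max (Kt h) 0 + 1" for h
  have C0: "C h > 0" for h
  proof -
    have "0 \<le> AQ * BR * max Kc 0 * max (Kt h) 0" using AQ BR by simp
    then show ?thesis by (simp add: C_def)
  qed
  show ?thesis
  proof (intro exI[of _ C] conjI ballI allI impI)
    show "\<And>h. h \<in> {0..p1} \<Longrightarrow> C h > 0" using C0 by blast
    fix \<beta> :: real and b :: "real \<Rightarrow> complex" and c :: "nat \<Rightarrow> real \<Rightarrow> complex" and f
    assume \<beta>: "\<beta> > 0" and contb: "continuous_on UNIV b"
      and bb: "\<forall>m. cmod (b m) \<le> 1 / cmod (poly R (\<i> * complex_of_real m))"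
      and cE: "\<forall>h\<in>{0..p1}. c h \<in> E_space \<beta> \<mu>"
      and fE: "f \<in> Exp_space q (sector d a) \<delta> \<kappa> \<beta> \<mu> \<alpha> \<rho>"
    define Nf where "Nf = Exp_norm q (sector d a) \<delta> \<kappa> \<beta> \<mu> \<alpha> \<rho> f"
    define Nc where "Nc h = E_norm \<beta> \<mu> (c h)" for h
    define wm where "wm y = (1 + \<bar>y\<bar>) powr \<mu> * exp (\<beta> * \<bar>y\<bar>)" for y :: real
    define wt where "wt = wtau q \<delta> \<kappa> \<alpha>"
    have ew: "exp_weight q \<delta> \<kappa> \<beta> \<mu> \<alpha> \<tau> m = wm m * wt \<tau>" for \<tau> m
      by (simp add: exp_weight_split wm_def wt_def)
    have wt0: "wt z > 0" for z by (simp add: wt_def wtau_def)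
    have wm1: "wm y \<ge> 1" for y
    proof -
      have "(1 + \<bar>y\<bar>) powr \<mu> \<ge> 1" using mu1 by (simp add: ge_one_powr_ge_zero)
      moreover have "exp (\<beta> * \<bar>y\<bar>) \<ge> 1" using \<beta> by simp
      ultimately have "1 * 1 \<le> (1 + \<bar>y\<bar>) powr \<mu> * exp (\<beta> * \<bar>y\<bar>)" by (intro mult_mono) auto
      then show ?thesis unfolding wm_def by simp
    qed
    have contf: "continuous_on (S \<times> UNIV) (\<lambda>p. f (fst p) (snd p))"
      and holf: "\<And>m. (\<lambda>\<tau>. f \<tau> m) holomorphic_on Op"
      and bddf: "bdd_above ((\<lambda>p. exp_weight q \<delta> \<kappa> \<beta> \<mu> \<alpha> (fst p) (snd p) * cmod (f (fst p) (snd p))) ` (S \<times> UNIV))"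
      using fE unfolding Exp_space_def S_def Op_def by auto
    have fb: "wm m * wt \<tau> * cmod (f \<tau> m) \<le> Nf" if "\<tau> \<in> S" for \<tau> m
    proof -
      have "exp_weight q \<delta> \<kappa> \<beta> \<mu> \<alpha> (fst (\<tau>, m)) (snd (\<tau>, m)) * cmod (f (fst (\<tau>, m)) (snd (\<tau>, m))) \<le> Nf"
        unfolding Nf_def Exp_norm_def S_def[symmetric] using that by (intro cSUP_upper bddf) auto
      then show ?thesis by (simp add: ew)
    qed
    have "0 \<le> wm 0 * wt 0 * cmod (f 0 0)" using wm1[of 0] wt0[of 0] by simp
    then have Nf0: "Nf \<ge> 0" using fb[OF Sne, of 0] by linarith
    have contc: "continuous_on UNIV (c h)" and bddc: "bdd_above ((\<lambda>m. wm m * cmod (c h m)) ` UNIV)"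
      if "h \<le> p1" for h
      using cE that unfolding E_space_def wm_def by auto
    have cb: "wm y * cmod (c h y) \<le> Nc h" if "h \<le> p1" for h y
      unfolding Nc_def E_norm_def wm_def[symmetric] using bddc[OF that] by (intro cSUP_upper) auto
    have Nc0: "Nc h \<ge> 0" if "h \<le> p1" for h
    proof -
      have "0 \<le> wm 0 * cmod (c h 0)" using wm1[of 0] by simp
      then show ?thesis using cb[OF that, of 0] by linarith
    qed
    have cbd: "cmod (c h y) \<le> Nc h" if "h \<le> p1" for h y
    proof -
      have "1 * cmod (c h y) \<le> wm y * cmod (c h y)" using wm1[of y] by (intro mult_right_mono) auto
      then show ?thesis using cb[OF that, of y] by linarith
    qed
    define sh where "sh h = q powr (- real h / real k)" for h :: nat
    have sh0: "sh h > 0" for h using q by (simp add: sh_def)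
    have sh1: "sh h \<le> 1" for h
    proof -
      have "q powr (- real h / real k) \<le> q powr 0" using q by (intro powr_mono) auto
      then show ?thesis using q by (simp add: sh_def)
    qed
    define F where "F h \<tau> x = poly Q (\<i> * complex_of_real x) * f (complex_of_real (sh h) * \<tau>) x" for h \<tau> x
    define W where "W h \<tau> = AQ * Nf / wt (complex_of_real (sh h) * \<tau>)" for h \<tau>
    define g where "g x = (1 + \<bar>x\<bar>) powr (-ae)" for x :: real
    define G where "G h \<tau> m = (LINT x|lborel. c h (m - x) * F h \<tau> x)" for h \<tau> m
    define ch where "ch h = (q powr (1 / real k)) powr (real h * (real h - 1) / 2)" for h :: nat
    have gi: "integrable lborel g" unfolding g_def using ae1 by (rule integrable_decay)
    have g0: "g x \<ge> 0" for x by (simp add: g_def)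
    have fS: "complex_of_real (sh h) * \<tau> \<in> S" if "\<tau> \<in> S" for h \<tau> using Ssc[OF that sh0 sh1] .
    have fbd: "cmod (f \<sigma> x) \<le> Nf / ((1 + \<bar>x\<bar>) powr \<mu> * wt \<sigma>)" if "\<sigma> \<in> S" for \<sigma> x
    proof -
      have "(1 + \<bar>x\<bar>) powr \<mu> \<le> wm x" unfolding wm_def using \<beta>
        by (intro mult_le_cancel_left1[THEN iffD2] ) (auto intro: ge_one_powr_ge_zero simp: mult_le_cancel_left1)
      then have "(1 + \<bar>x\<bar>) powr \<mu> * wt \<sigma> * cmod (f \<sigma> x) \<le> wm x * wt \<sigma> * cmod (f \<sigma> x)"
        using wt0[of \<sigma>] by (intro mult_right_mono) auto
      also have "\<dots> \<le> Nf" by (rule fb[OF that])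
      finally show ?thesis using wt0[of \<sigma>] by (simp add: field_simps mult.commute)
    qed
    have Fb: "cmod (F h \<tau> x) \<le> W h \<tau> * g x" if "\<tau> \<in> S" for h \<tau> x
    proof -
      define \<sigma> where "\<sigma> = complex_of_real (sh h) * \<tau>"
      have \<sigma>S: "\<sigma> \<in> S" using fS[OF that] by (simp add: \<sigma>_def)
      have Qb: "cmod (poly Q (\<i> * complex_of_real x)) \<le> AQ * (1 + \<bar>x\<bar>) ^ degree Q"
        using AQ(2)[of "\<i> * complex_of_real x"] by (simp add: norm_mult)
      have "cmod (F h \<tau> x) \<le> AQ * (1 + \<bar>x\<bar>) ^ degree Q * (Nf / ((1 + \<bar>x\<bar>) powr \<mu> * wt \<sigma>))"
        unfolding F_def norm_mult \<sigma>_def[symmetric] using Qb fbd[OF \<sigma>S, of x] AQ(1) by (intro mult_mono) auto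
      also have "\<dots> = AQ * Nf / wt \<sigma> * ((1 + \<bar>x\<bar>) ^ degree Q / (1 + \<bar>x\<bar>) powr \<mu>)"
        by (simp add: field_simps)
      also have "(1 + \<bar>x\<bar>) ^ degree Q / (1 + \<bar>x\<bar>) powr \<mu> = g x"
        unfolding g_def ae_def by (simp add: powr_realpow[symmetric] powr_diff[symmetric] powr_minus_divide)
      finally show ?thesis by (simp add: W_def \<sigma>_def)
    qed
    have contF: "continuous_on (S \<times> UNIV) (\<lambda>p. F h (fst p) (snd p))" for h
    proof -
      have "continuous_on (S \<times> UNIV) (\<lambda>p. (\<lambda>p. f (fst p) (snd p)) (complex_of_real (sh h) * fst p, snd p))"
        by (rule continuous_on_compose2[OF contf]) (auto intro!: continuous_intros simp: fS mem_Times_iff)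
      then show ?thesis unfolding F_def by (auto intro!: continuous_intros)
    qed
    have holF: "(\<lambda>\<tau>. F h \<tau> x) holomorphic_on Op" for h x
    proof -
      have "((\<lambda>z. f z x) \<circ> (\<lambda>\<tau>. complex_of_real (sh h) * \<tau>)) holomorphic_on Op"
        by (rule holomorphic_on_compose_gen[OF _ holf]) (auto intro!: holomorphic_intros Opsc sh0 sh1)
      then show ?thesis unfolding F_def o_def by (intro holomorphic_intros)
    qed
    have contW: "continuous_on S (W h)" for h
    proof -
      have nz: "cmod (complex_of_real (sh h) * \<tau> + complex_of_real \<delta>) \<noteq> 0" if "\<tau> \<in> S" for \<tau>
        using SD[OF fS[OF that, of h]] Dd by linarith
      have "continuous_on S (\<lambda>\<tau>. wt (complex_of_real (sh h) * \<tau>))"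
        unfolding wt_def wtau_def using nz q by (intro continuous_intros) auto
      then show ?thesis unfolding W_def using wt0 by (intro continuous_intros) (auto simp: less_imp_neq[symmetric])
    qed
    have Gcont: "continuous_on (S \<times> UNIV) (\<lambda>p. G h (fst p) (snd p))" if "h \<le> p1" for h
      unfolding G_def using param_cont[OF contF Fb contW gi g0 contc[OF that] cbd[OF that]] by blast
    have Gholo: "(\<lambda>\<tau>. G h \<tau> m) holomorphic_on Op" if "h \<le> p1" for h m
      unfolding G_def using param_holo[OF contF holF Opopen OpS Fb contW gi g0 contc[OF that] cbd[OF that]] by blast
    have qc: "q_conv q k p1 c Q f \<tau> m = (\<Sum>h = 0..p1. \<tau> ^ h / complex_of_real (ch h) * G h \<tau> m)" for \<tau> m
      unfolding q_conv_def G_def F_def sh_def ch_def by (simp add: mult.assoc)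
    have perh: "wm m * wt \<tau> * cmod (b m) * cmod (\<tau> ^ h / complex_of_real (ch h) * G h \<tau> m) \<le> C h * Nc h * Nf"
      if \<tau>S: "\<tau> \<in> S" and hp: "h \<le> p1" for \<tau> m h
    proof -
      define \<sigma> where "\<sigma> = complex_of_real (sh h) * \<tau>"
      have \<sigma>S: "\<sigma> \<in> S" using fS[OF \<tau>S] by (simp add: \<sigma>_def)
      define Pm where "Pm x = (1 + \<bar>m - x\<bar>) powr (-\<mu>) * (1 + \<bar>x\<bar>) powr (-ae)" for x
      have Pmi: "integrable lborel Pm" unfolding Pm_def using Kc by blast
      define J where "J = (\<integral>x. Pm x \<partial>lborel)"
      have J0: "J \<ge> 0" unfolding J_def Pm_def by (intro integral_nonneg_AE) auto
      have JK: "(1 + \<bar>m\<bar>) powr ae * J \<le> Kc" unfolding J_def Pm_def using Kc by blast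
      define K\<tau> where "K\<tau> = Nc h * AQ * Nf / wt \<sigma> / exp (\<beta> * \<bar>m\<bar>)"
      have pw: "cmod (c h (m - x) * F h \<tau> x) \<le> K\<tau> * Pm x" for x
      proof -
        have "cmod (c h (m - x)) * cmod (F h \<tau> x) \<le> K\<tau> * Pm x"
          unfolding K\<tau>_def Pm_def ae_def
        proof (rule ptwise[where fv="cmod (f \<sigma> x)"])
          show "0 \<le> cmod (c h (m - x))" "0 \<le> cmod (f \<sigma> x)" "0 < wt \<sigma>" "0 \<le> \<beta>" "0 \<le> AQ"
            using wt0 \<beta> AQ by auto
          show "(1 + \<bar>m - x\<bar>) powr \<mu> * exp (\<beta> * \<bar>m - x\<bar>) * cmod (c h (m - x)) \<le> Nc h"
            using cb[OF hp, of "m - x"] by (simp add: wm_def)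
          show "0 \<le> cmod (F h \<tau> x)" by simp
          have "cmod (poly Q (\<i> * complex_of_real x)) \<le> AQ * (1 + \<bar>x\<bar>) ^ degree Q"
            using AQ(2)[of "\<i> * complex_of_real x"] by (simp add: norm_mult)
          then show "cmod (F h \<tau> x) \<le> AQ * (1 + \<bar>x\<bar>) ^ degree Q * cmod (f \<sigma> x)"
            unfolding F_def \<sigma>_def[symmetric] norm_mult by (intro mult_right_mono) auto
          show "(1 + \<bar>x\<bar>) powr \<mu> * exp (\<beta> * \<bar>x\<bar>) * wt \<sigma> * cmod (f \<sigma> x) \<le> Nf"
            using fb[OF \<sigma>S, of x] by (simp add: wm_def)
        qed
        then show ?thesis by (simp add: norm_mult)
      qed
      have meas: "(\<lambda>x. c h (m - x) * F h \<tau> x) \<in> borel_measurable lborel"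
      proof (rule cont_meas)
        have "continuous_on UNIV (\<lambda>x::real. c h (m - x))"
          by (rule continuous_on_compose2[OF contc[OF hp]]) (auto intro!: continuous_intros)
        then show "continuous_on UNIV (\<lambda>x. c h (m - x) * F h \<tau> x)"
          using cont_slice[OF contF \<tau>S] by (intro continuous_intros)
      qed
      have Gb: "cmod (G h \<tau> m) \<le> K\<tau> * J"
      proof -
        have "cmod (G h \<tau> m) \<le> (\<integral>x. K\<tau> * Pm x \<partial>lborel)"
          unfolding G_def
        proof (rule Bochner_Integration.integral_norm_bound_integral)
          show "integrable lborel (\<lambda>x. c h (m - x) * F h \<tau> x)"
            by (rule integrable_by_bound[OF Pmi meas pw])
          show "integrable lborel (\<lambda>x. K\<tau> * Pm x)" using Pmi by simp
          show "\<And>x. x \<in> space lborel \<Longrightarrow> cmod (c h (m - x) * F h \<tau> x) \<le> K\<tau> * Pm x" using pw by blast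
        qed
        then show ?thesis by (simp add: J_def)
      qed
      have K\<tau>0: "K\<tau> \<ge> 0" unfolding K\<tau>_def using Nc0[OF hp] AQ Nf0 wt0[of \<sigma>] by simp
      have bR: "cmod (b m) * (1 + \<bar>m\<bar>) ^ degree Q \<le> BR"
      proof -
        have "cmod (b m) * (1 + \<bar>m\<bar>) ^ degree Q \<le> 1 / cmod (poly R (\<i> * complex_of_real m)) * (1 + \<bar>m\<bar>) ^ degree Q"
          using bb by (intro mult_right_mono) auto
        also have "\<dots> \<le> BR" using BR(2)[of m] by simp
        finally show ?thesis .
      qed
      have mpow: "(1 + \<bar>m\<bar>) powr \<mu> = (1 + \<bar>m\<bar>) ^ degree Q * (1 + \<bar>m\<bar>) powr ae"
        unfolding ae_def by (simp add: powr_realpow[symmetric] powr_add[symmetric])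
      have A: "wm m * cmod (b m) * cmod (G h \<tau> m) \<le> Nc h * AQ * Nf / wt \<sigma> * (BR * max Kc 0)"
      proof -
        have "wm m * cmod (b m) * cmod (G h \<tau> m) \<le> wm m * cmod (b m) * (K\<tau> * J)"
          using Gb wm1[of m] by (intro mult_left_mono) auto
        also have "\<dots> = Nc h * AQ * Nf / wt \<sigma> * ((cmod (b m) * (1 + \<bar>m\<bar>) ^ degree Q) * ((1 + \<bar>m\<bar>) powr ae * J))"
          unfolding K\<tau>_def wm_def mpow by (simp add: field_simps)
        also have "\<dots> \<le> Nc h * AQ * Nf / wt \<sigma> * (BR * max Kc 0)"
        proof (rule mult_left_mono)
          show "cmod (b m) * (1 + \<bar>m\<bar>) ^ degree Q * ((1 + \<bar>m\<bar>) powr ae * J) \<le> BR * max Kc 0"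
            using bR JK J0 BR(1) by (intro mult_mono) auto
          show "0 \<le> Nc h * AQ * Nf / wt \<sigma>" using Nc0[OF hp] AQ Nf0 wt0[of \<sigma>] by simp
        qed
        finally show ?thesis .
      qed
      have B: "cmod (\<tau> ^ h / complex_of_real (ch h)) * wt \<tau> \<le> max (Kt h) 0 * wt \<sigma>"
      proof -
        have "cmod (\<tau> ^ h / complex_of_real (ch h)) * wt \<tau> \<le> Kt h * wt \<sigma>"
          using Kt[OF \<tau>S, of h] by (simp add: wt_def ch_def \<sigma>_def sh_def)
        also have "\<dots> \<le> max (Kt h) 0 * wt \<sigma>" using wt0[of \<sigma>] by (intro mult_right_mono) auto
        finally show ?thesis .
      qed
      have "wm m * wt \<tau> * cmod (b m) * cmod (\<tau> ^ h / complex_of_real (ch h) * G h \<tau> m)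
          = (cmod (\<tau> ^ h / complex_of_real (ch h)) * wt \<tau>) * (wm m * cmod (b m) * cmod (G h \<tau> m))"
        by (simp only: norm_mult mult_ac)
      also have "\<dots> \<le> (max (Kt h) 0 * wt \<sigma>) * (Nc h * AQ * Nf / wt \<sigma> * (BR * max Kc 0))"
        by (rule mult_mono[OF B A]) (use wt0[of \<sigma>] wm1[of m] in auto)
      also have "\<dots> = (AQ * BR * max Kc 0 * max (Kt h) 0) * Nc h * Nf"
        using wt0[of \<sigma>] by (simp add: field_simps)
      also have "\<dots> \<le> C h * Nc h * Nf"
        unfolding C_def using Nc0[OF hp] Nf0 by (intro mult_right_mono) auto
      finally show ?thesis .
    qed
    have pb: "exp_weight q \<delta> \<kappa> \<beta> \<mu> \<alpha> \<tau> m * cmod (b m * q_conv q k p1 c Q f \<tau> m) \<le> (\<Sum>h = 0..p1. C h * Nc h * Nf)"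
      if \<tau>S: "\<tau> \<in> S" for \<tau> m
    proof -
      have "exp_weight q \<delta> \<kappa> \<beta> \<mu> \<alpha> \<tau> m * cmod (b m * q_conv q k p1 c Q f \<tau> m)
          = wm m * wt \<tau> * cmod (b m) * cmod (\<Sum>h = 0..p1. \<tau> ^ h / complex_of_real (ch h) * G h \<tau> m)"
        by (simp add: ew qc norm_mult)
      also have "\<dots> \<le> wm m * wt \<tau> * cmod (b m) * (\<Sum>h = 0..p1. cmod (\<tau> ^ h / complex_of_real (ch h) * G h \<tau> m))"
        using wm1[of m] wt0[of \<tau>] by (intro mult_left_mono norm_sum) auto
      also have "\<dots> = (\<Sum>h = 0..p1. wm m * wt \<tau> * cmod (b m) * cmod (\<tau> ^ h / complex_of_real (ch h) * G h \<tau> m))"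
        by (simp add: sum_distrib_left)
      also have "\<dots> \<le> (\<Sum>h = 0..p1. C h * Nc h * Nf)"
        using perh[OF \<tau>S] by (intro sum_mono) auto
      finally show ?thesis .
    qed
    show "(\<lambda>\<tau> m. b m * q_conv q k p1 c Q f \<tau> m) \<in> Exp_space q (sector d a) \<delta> \<kappa> \<beta> \<mu> \<alpha> \<rho>"
      unfolding Exp_space_def mem_Collect_eq S_def[symmetric] Op_def[symmetric]
    proof (intro conjI allI)
      show "continuous_on (S \<times> UNIV) (\<lambda>p. b (snd p) * q_conv q k p1 c Q f (fst p) (snd p))"
        unfolding qc
      proof (intro continuous_intros)
        show "continuous_on (S \<times> UNIV) (\<lambda>p. b (snd p))"
          by (rule continuous_on_compose2[OF contb]) (auto intro: continuous_intros)
        show "\<And>h. h \<in> {0..p1} \<Longrightarrow> continuous_on (S \<times> UNIV) (\<lambda>p. G h (fst p) (snd p))"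
          using Gcont by auto
        show "\<And>h. h \<in> {0..p1} \<Longrightarrow> \<forall>x\<in>S \<times> UNIV. complex_of_real (ch h) \<noteq> 0"
          using q by (auto simp: ch_def)
      qed
      show "(\<lambda>\<tau>. b m * q_conv q k p1 c Q f \<tau> m) holomorphic_on Op" for m
        unfolding qc using Gholo q by (intro holomorphic_intros) (auto simp: ch_def)
      show "bdd_above ((\<lambda>p. exp_weight q \<delta> \<kappa> \<beta> \<mu> \<alpha> (fst p) (snd p) * cmod (b (snd p) * q_conv q k p1 c Q f (fst p) (snd p))) ` (S \<times> UNIV))"
        using pb by (intro bdd_aboveI2[where M="\<Sum>h = 0..p1. C h * Nc h * Nf"]) auto
    qed
    show "Exp_norm q (sector d a) \<delta> \<kappa> \<beta> \<mu> \<alpha> \<rho> (\<lambda>\<tau> m. b m * q_conv q k p1 c Q f \<tau> m)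
         \<le> (\<Sum>h = 0..p1. C h * E_norm \<beta> \<mu> (c h)) * Exp_norm q (sector d a) \<delta> \<kappa> \<beta> \<mu> \<alpha> \<rho> f"
    proof -
      have "Exp_norm q (sector d a) \<delta> \<kappa> \<beta> \<mu> \<alpha> \<rho> (\<lambda>\<tau> m. b m * q_conv q k p1 c Q f \<tau> m)
          \<le> (\<Sum>h = 0..p1. C h * Nc h * Nf)"
        unfolding Exp_norm_def S_def[symmetric] using Sne pb by (intro cSUP_least) auto
      also have "\<dots> = (\<Sum>h = 0..p1. C h * E_norm \<beta> \<mu> (c h)) * Exp_norm q (sector d a) \<delta> \<kappa> \<beta> \<mu> \<alpha> \<rho> f"
        by (simp add: Nc_def Nf_def sum_distrib_right)
      finally show ?thesis .
    qed
  qed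
qed


end
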